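(* Let $n$ be odd, $t\in\{n,2n\}$ and $\lambda$ a positive divisor of $t$. Then there exists a cellular biembedding of a pair of cyclic $3$-cycle decompositions of ${}^\lambda K_{(\frac{6n}{t}+1)\times\frac{t}{\lambda}}$ into an orientable surface.
   Context: $K_{q\times r}$ is the complete multipartite graph with $q$ parts each of size $r$, and ${}^\lambda\Gamma$ denotes the multigraph obtained from $\Gamma$ by repeating each edge $\lambda$ times; the vertex set is identified with $\mathbb{Z}_{qr}$ with parts the cosets of the subgroup of order $r$. A cyclic $3$-cycle decomposition is a set of $3$-cycles whose edge multisets partition the edge multiset and which is invariant under translation by $\mathbb{Z}_{qr}$. An embedding of a multigraph (topologized via a simple subdivision) into a surface is cellular if every face is homeomorphic to an open disc; a biembedding of two cycle decompositions $\mathcal D,\mathcal D'$ is a face $2$-colorable embedding in which one colour class consists of the cycles of $\mathcal D$ and the other of those of $\mathcal D'$. *)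

theory Defs
  imports Main "HOL-Library.Multiset"
begin

text \<open>The multigraph lambda K_{q x r} on vertex set Z_{qr} = {0..<q*r}; the parts are the
cosets of the subgroup of order r, i.e. the residue classes mod q.  Darts (arcs) are triples
(x, y, i): an edge between x and y (in different parts) with parallel-edge label i < lambda,
traversed from x to y.  The edge {x,y}_i consists of the two darts (x,y,i) and (y,x,i).\<close>

definition mp_vertices :: "nat \<Rightarrow> nat \<Rightarrow> nat set" where
  "mp_vertices q r = {..<q*r}"

definition same_part :: "nat \<Rightarrow> nat \<Rightarrow> nat \<Rightarrow> bool" where
  "same_part q x y \<longleftrightarrow> x mod q = y mod q"

definition mp_darts :: "nat \<Rightarrow> nat \<Rightarrow> nat \<Rightarrow> (nat \<times> nat \<times> nat) set" where
  "mp_darts q r lam = {(x, y, i). x < q*r \<and> y < q*r \<and> \<not> same_part q x y \<and> i < lam}"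

definition rev_dart :: "nat \<times> nat \<times> nat \<Rightarrow> nat \<times> nat \<times> nat" where
  "rev_dart d = (case d of (x, y, i) \<Rightarrow> (y, x, i))"

definition tail :: "nat \<times> nat \<times> nat \<Rightarrow> nat" where
  "tail d = fst d"

text \<open>3-cycle decompositions: a 3-cycle in a (multi)graph is determined (up to the choice of
parallel edges) by its 3-element vertex set; a decomposition is a multiset of 3-cycles
covering every pair of vertices from different parts exactly lambda times.\<close>

definition is_3cycle_decomp :: "nat \<Rightarrow> nat \<Rightarrow> nat \<Rightarrow> nat set multiset \<Rightarrow> bool" where
  "is_3cycle_decomp q r lam D \<longleftrightarrow>
     (\<forall>S \<in># D. card S = 3 \<and> S \<subseteq> mp_vertices q r \<and>
                (\<forall>x\<in>S. \<forall>y\<in>S. x \<noteq> y \<longrightarrow> \<not> same_part q x y)) \<and>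
     (\<forall>x \<in> mp_vertices q r. \<forall>y \<in> mp_vertices q r. \<not> same_part q x y \<longrightarrow>
         size (filter_mset (\<lambda>S. x \<in> S \<and> y \<in> S) D) = lam)"

definition translate_cycle :: "nat \<Rightarrow> nat \<Rightarrow> nat set \<Rightarrow> nat set" where
  "translate_cycle v g S = (\<lambda>x. (x + g) mod v) ` S"

definition is_cyclic_3cycle_decomp :: "nat \<Rightarrow> nat \<Rightarrow> nat \<Rightarrow> nat set multiset \<Rightarrow> bool" where
  "is_cyclic_3cycle_decomp q r lam D \<longleftrightarrow>
     is_3cycle_decomp q r lam D \<and>
     (\<forall>g < q*r. image_mset (translate_cycle (q*r) g) D = D)"

text \<open>Orientable cellular embeddings of a connected multigraph, combinatorially: a rotation
system, i.e. a permutation rho of the darts that cyclically permutes the darts at each vertex.\<close>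

definition rotation_system :: "(nat \<times> nat \<times> nat) set \<Rightarrow> (nat \<times> nat \<times> nat \<Rightarrow> nat \<times> nat \<times> nat) \<Rightarrow> bool" where
  "rotation_system Dt \<rho> \<longleftrightarrow>
     bij_betw \<rho> Dt Dt \<and>
     (\<forall>d\<in>Dt. tail (\<rho> d) = tail d) \<and>
     (\<forall>d\<in>Dt. \<forall>d'\<in>Dt. tail d = tail d' \<longrightarrow> (\<exists>k. (\<rho> ^^ k) d = d'))"

definition face_perm :: "(nat \<times> nat \<times> nat \<Rightarrow> nat \<times> nat \<times> nat) \<Rightarrow> nat \<times> nat \<times> nat \<Rightarrow> nat \<times> nat \<times> nat" where
  "face_perm \<rho> = \<rho> \<circ> rev_dart"

definition face_of :: "(nat \<times> nat \<times> nat \<Rightarrow> nat \<times> nat \<times> nat) \<Rightarrow> nat \<times> nat \<times> nat \<Rightarrow> (nat \<times> nat \<times> nat) set" where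
  "face_of \<rho> d = {(face_perm \<rho> ^^ k) d | k. True}"

definition faces :: "(nat \<times> nat \<times> nat) set \<Rightarrow> (nat \<times> nat \<times> nat \<Rightarrow> nat \<times> nat \<times> nat) \<Rightarrow> (nat \<times> nat \<times> nat) set set" where
  "faces Dt \<rho> = face_of \<rho> ` Dt"

definition face_vertices :: "(nat \<times> nat \<times> nat) set \<Rightarrow> nat set" where
  "face_vertices f = tail ` f"

definition orientable_biembedding ::
  "nat \<Rightarrow> nat \<Rightarrow> nat \<Rightarrow> nat set multiset \<Rightarrow> nat set multiset \<Rightarrow>
   (nat \<times> nat \<times> nat \<Rightarrow> nat \<times> nat \<times> nat) \<Rightarrow> ((nat \<times> nat \<times> nat) set \<Rightarrow> bool) \<Rightarrow> bool" where
  "orientable_biembedding q r lam D D' \<rho> col \<longleftrightarrow>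
     (let Dt = mp_darts q r lam in
       rotation_system Dt \<rho> \<and>
       (\<forall>f \<in> faces Dt \<rho>. card f = 3) \<and>
       (\<forall>d \<in> Dt. col (face_of \<rho> d) \<noteq> col (face_of \<rho> (rev_dart d))) \<and>
       image_mset face_vertices (mset_set {f \<in> faces Dt \<rho>. col f}) = D \<and>
       image_mset face_vertices (mset_set {f \<in> faces Dt \<rho>. \<not> col f}) = D')"

end

theory Submission
  imports Defs
begin


definition head :: "nat \<times> nat \<times> nat \<Rightarrow> nat" where "head d = fst (snd d)"

lemma finite_mp_darts: "finite (mp_darts q r lam)"
proof -
  have "mp_darts q r lam \<subseteq> {..<q*r} \<times> {..<q*r} \<times> {..<lam}"
    by (auto simp: mp_darts_def)
  then show ?thesis by (rule finite_subset) auto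
qed

lemma mp_darts_D:
  assumes "d \<in> mp_darts q r lam"
  shows "tail d < q*r" "head d < q*r" "\<not> same_part q (tail d) (head d)" "snd (snd d) < lam"
    "tail d \<noteq> head d"
  using assms by (auto simp: mp_darts_def tail_def head_def same_part_def)

lemma rev_dart_in: "d \<in> mp_darts q r lam \<Longrightarrow> rev_dart d \<in> mp_darts q r lam"
  by (auto simp: mp_darts_def rev_dart_def same_part_def)

lemma tail_rev[simp]: "tail (rev_dart d) = head d" and head_rev[simp]: "head (rev_dart d) = tail d"
  by (cases d; auto simp: rev_dart_def tail_def head_def)+

lemma funpow_period:
  assumes fin: "finite A" and into: "\<And>x. x \<in> A \<Longrightarrow> f x \<in> A" and inj: "inj_on f A" and a: "a \<in> A"
  shows "\<exists>p>0. (f ^^ p) a = a"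
proof -
  have pin: "(f ^^ k) a \<in> A" for k by (induction k) (auto simp: a into)
  have "\<not> inj_on (\<lambda>k. (f ^^ k) a) {..card A}"
  proof
    assume "inj_on (\<lambda>k. (f ^^ k) a) {..card A}"
    then have "card ((\<lambda>k. (f ^^ k) a) ` {..card A}) = card {..card A}" by (rule card_image)
    moreover have "card ((\<lambda>k. (f ^^ k) a) ` {..card A}) \<le> card A"
      using pin by (intro card_mono[OF fin]) auto
    ultimately show False by simp
  qed
  then obtain i j where ij: "i \<le> card A" "j \<le> card A" "i \<noteq> j" "(f ^^ i) a = (f ^^ j) a"
    by (auto simp: inj_on_def)
  have cancel: "(f ^^ (i + m)) a = (f ^^ (j + m)) a \<Longrightarrow> (f ^^ i) a = (f ^^ j) a" for i j m
  proof (induction m arbitrary: i j)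
    case 0 then show ?case by simp
  next
    case (Suc m)
    have "f ((f ^^ (i + m)) a) = f ((f ^^ (j + m)) a)" using Suc.prems by simp
    then have "(f ^^ (i + m)) a = (f ^^ (j + m)) a" using inj pin by (auto simp: inj_on_def)
    then show ?case by (rule Suc.IH)
  qed
  show ?thesis
  proof (cases "i < j")
    case True
    have "(f ^^ (0 + i)) a = (f ^^ ((j - i) + i)) a" using ij True by simp
    then have "(f ^^ 0) a = (f ^^ (j - i)) a" by (rule cancel)
    then show ?thesis using True by (intro exI[of _ "j - i"]) auto
  next
    case False
    then have "j < i" using ij by simp
    have "(f ^^ (0 + j)) a = (f ^^ ((i - j) + j)) a" using ij \<open>j < i\<close> by simp
    then have "(f ^^ 0) a = (f ^^ (i - j)) a" by (rule cancel)
    then show ?thesis using \<open>j < i\<close> by (intro exI[of _ "i - j"]) auto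
  qed
qed

lemma funpow_mult_fix: "(f ^^ p) a = a \<Longrightarrow> (f ^^ (p * m)) a = a"
  by (induction m) (auto simp: funpow_add)

lemma funpow_reach_sym:
  assumes fin: "finite A" and into: "\<And>x. x \<in> A \<Longrightarrow> f x \<in> A" and inj: "inj_on f A" and a: "a \<in> A"
    and "(f ^^ k) a = b"
  shows "\<exists>k'. (f ^^ k') b = a"
proof -
  obtain p where p: "p > 0" "(f ^^ p) a = a" using funpow_period[OF assms(1-4)] by blast
  have "(f ^^ (p * k - k)) b = (f ^^ (p * k - k + k)) a" using assms(5) by (simp add: funpow_add)
  also have "p * k - k + k = p * k" using p by simp
  also have "(f ^^ (p * k)) a = a" using p(2) by (rule funpow_mult_fix)
  finally show ?thesis by blast
qed
locale biemb =
  fixes q r lam :: nat and Lab :: "'l set" and val :: "'l \<Rightarrow> nat" and negL :: "'l \<Rightarrow> 'l"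
    and sg :: "'l \<Rightarrow> 'l" and P :: "'l \<Rightarrow> bool" and lift :: "nat \<times> nat \<times> nat \<Rightarrow> 'l"
  assumes qr_pos: "0 < q * r"
    and lift_bij: "\<And>x. x < q * r \<Longrightarrow> bij_betw lift {d \<in> mp_darts q r lam. tail d = x} Lab"
    and lift_head: "\<And>d. d \<in> mp_darts q r lam \<Longrightarrow> head d = (tail d + val (lift d)) mod (q * r)"
    and lift_rev: "\<And>d. d \<in> mp_darts q r lam \<Longrightarrow> lift (rev_dart d) = negL (lift d)"
    and sg_in: "\<And>l. l \<in> Lab \<Longrightarrow> sg l \<in> Lab"
    and sg_inj: "inj_on sg Lab"
    and sg_cyc: "\<And>l l'. l \<in> Lab \<Longrightarrow> l' \<in> Lab \<Longrightarrow> \<exists>k. (sg ^^ k) l = l'"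
    and tau3: "\<And>l. l \<in> Lab \<Longrightarrow> sg (negL (sg (negL (sg (negL l))))) = l"
    and tau_sum: "\<And>l. l \<in> Lab \<Longrightarrow>
       (val l + val (sg (negL l)) + val (sg (negL (sg (negL l))))) mod (q * r) = 0"
    and P_tau: "\<And>l. l \<in> Lab \<Longrightarrow> P (sg (negL l)) = P l"
    and P_neg: "\<And>l. l \<in> Lab \<Longrightarrow> P (negL l) = (\<not> P l)"
begin

abbreviation "v \<equiv> q * r"
abbreviation "Dt \<equiv> mp_darts q r lam"

definition unl :: "nat \<Rightarrow> 'l \<Rightarrow> nat \<times> nat \<times> nat" where
  "unl x l = inv_into {d \<in> Dt. tail d = x} lift l"

definition rho :: "nat \<times> nat \<times> nat \<Rightarrow> nat \<times> nat \<times> nat" where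
  "rho d = unl (tail d) (sg (lift d))"

definition Tr :: "nat \<Rightarrow> nat \<times> nat \<times> nat \<Rightarrow> nat \<times> nat \<times> nat" where
  "Tr g d = unl ((tail d + g) mod v) (lift d)"

definition col :: "(nat \<times> nat \<times> nat) set \<Rightarrow> bool" where
  "col f = (\<exists>d\<in>f. P (lift d))"

lemma lift_in: assumes "d \<in> Dt" shows "lift d \<in> Lab"
proof -
  have b: "bij_betw lift {d' \<in> Dt. tail d' = tail d} Lab" using lift_bij mp_darts_D(1)[OF assms] by blast
  have "d \<in> {d' \<in> Dt. tail d' = tail d}" using assms by blast
  then show ?thesis using bij_betwE[OF b] by blast
qed

lemma dart_eq: assumes "d \<in> Dt" "d' \<in> Dt" "tail d = tail d'" "lift d = lift d'" shows "d = d'"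
proof -
  have b: "inj_on lift {d'' \<in> Dt. tail d'' = tail d}"
    using bij_betw_imp_inj_on lift_bij mp_darts_D(1)[OF assms(1)] by blast
  show ?thesis by (rule inj_onD[OF b assms(4)]) (use assms in simp_all)
qed

lemma unl: assumes "x < v" "l \<in> Lab"
  shows "unl x l \<in> Dt" "tail (unl x l) = x" "lift (unl x l) = l"
proof -
  have b: "bij_betw lift {d \<in> Dt. tail d = x} Lab" using lift_bij[OF assms(1)] .
  have im: "l \<in> lift ` {d \<in> Dt. tail d = x}" using bij_betw_imp_surj_on[OF b] assms(2) by simp
  have "unl x l \<in> {d \<in> Dt. tail d = x}" unfolding unl_def by (rule inv_into_into[OF im])
  then show "unl x l \<in> Dt" "tail (unl x l) = x" by simp_all
  show "lift (unl x l) = l" unfolding unl_def by (rule f_inv_into_f[OF im])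
qed

lemma negL_in: assumes "l \<in> Lab" shows "negL l \<in> Lab"
proof -
  have u: "unl 0 l \<in> Dt" "lift (unl 0 l) = l" using unl[OF qr_pos assms] by simp_all
  have "lift (rev_dart (unl 0 l)) \<in> Lab" using lift_in[OF rev_dart_in[OF u(1)]] .
  then show ?thesis using lift_rev[OF u(1)] u(2) by simp
qed

lemma rho: assumes "d \<in> Dt" shows "rho d \<in> Dt" "tail (rho d) = tail d" "lift (rho d) = sg (lift d)"
  using unl[OF mp_darts_D(1)[OF assms] sg_in[OF lift_in[OF assms]]] unfolding rho_def by simp_all

lemma rho_pow: assumes "d \<in> Dt"
  shows "(rho ^^ k) d \<in> Dt \<and> tail ((rho ^^ k) d) = tail d \<and> lift ((rho ^^ k) d) = (sg ^^ k) (lift d)"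
proof (induction k)
  case 0 then show ?case using assms by simp
next
  case (Suc k)
  then show ?case using rho[of "(rho ^^ k) d"] by simp
qed

lemma rotation: "rotation_system Dt rho"
proof -
  have sub: "rho ` Dt \<subseteq> Dt" using rho(1) by blast
  have inj: "inj_on rho Dt"
  proof (rule inj_onI)
    fix a b assume "a \<in> Dt" "b \<in> Dt" "rho a = rho b"
    then have "tail a = tail b" "sg (lift a) = sg (lift b)" using rho by metis+
    then have "lift a = lift b" using inj_onD[OF sg_inj] lift_in \<open>a \<in> Dt\<close> \<open>b \<in> Dt\<close> by blast
    then show "a = b" using dart_eq \<open>a \<in> Dt\<close> \<open>b \<in> Dt\<close> \<open>tail a = tail b\<close> by blast
  qed
  have "rho ` Dt = Dt" using endo_inj_surj[OF finite_mp_darts sub inj] .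
  then have bij: "bij_betw rho Dt Dt" using inj by (simp add: bij_betw_def)
  have cyc: "\<exists>k. (rho ^^ k) d = d'" if dd: "d \<in> Dt" "d' \<in> Dt" "tail d = tail d'" for d d'
  proof -
    obtain k where k: "(sg ^^ k) (lift d) = lift d'" using sg_cyc lift_in dd by blast
    have "(rho ^^ k) d = d'" using rho_pow[OF dd(1), of k] k dd dart_eq by metis
    then show ?thesis by blast
  qed
  have tl: "\<forall>d\<in>Dt. tail (rho d) = tail d" using rho(2) by blast
  have cy: "\<forall>d\<in>Dt. \<forall>d'\<in>Dt. tail d = tail d' \<longrightarrow> (\<exists>k. (rho ^^ k) d = d')" using cyc by blast
  show ?thesis unfolding rotation_system_def using bij tl cy by (intro conjI)
qed

abbreviation "F \<equiv> face_perm rho"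
abbreviation "tau l \<equiv> sg (negL l)"

lemma F: assumes "d \<in> Dt" shows "F d \<in> Dt" "tail (F d) = head d" "lift (F d) = tau (lift d)"
proof -
  have r: "rev_dart d \<in> Dt" using rev_dart_in[OF assms] .
  have e: "F d = rho (rev_dart d)" by (simp add: face_perm_def)
  show "F d \<in> Dt" unfolding e using rho(1)[OF r] .
  show "tail (F d) = head d" unfolding e using rho(2)[OF r] by simp
  show "lift (F d) = tau (lift d)" unfolding e using rho(3)[OF r] lift_rev[OF assms] by simp
qed

lemma tau_in: "l \<in> Lab \<Longrightarrow> tau l \<in> Lab" by (intro sg_in negL_in)

lemma F3: assumes "d \<in> Dt" shows "F (F (F d)) = d"
proof -
  let ?e = "lift d"
  have d1: "F d \<in> Dt" using F(1)[OF assms] .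
  have d2: "F (F d) \<in> Dt" using F(1)[OF d1] .
  have d3: "F (F (F d)) \<in> Dt" using F(1)[OF d2] .
  have l1: "lift (F d) = tau ?e" using F(3)[OF assms] .
  have l2: "lift (F (F d)) = tau (tau ?e)" using F(3)[OF d1] l1 by simp
  have l3: "lift (F (F (F d))) = tau (tau (tau ?e))" using F(3)[OF d2] l2 by simp
  have t1: "tail (F d) = (tail d + val ?e) mod v" using F(2)[OF assms] lift_head[OF assms] by simp
  have t2: "tail (F (F d)) = (tail (F d) + val (tau ?e)) mod v" using F(2)[OF d1] lift_head[OF d1] l1 by simp
  have t3: "tail (F (F (F d))) = (tail (F (F d)) + val (tau (tau ?e))) mod v"
    using F(2)[OF d2] lift_head[OF d2] l2 by simp
  have "tail (F (F (F d))) = (((tail d + val ?e) mod v + val (tau ?e)) mod v + val (tau (tau ?e))) mod v"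
    using t1 t2 t3 by simp
  also have "\<dots> = (tail d + (val ?e + val (tau ?e) + val (tau (tau ?e)))) mod v"
    by (simp add: mod_add_left_eq add.assoc)
  also have "\<dots> = tail d mod v" using tau_sum[OF lift_in[OF assms]] by (metis mod_add_right_eq add_0_right)
  also have "\<dots> = tail d" using mp_darts_D(1)[OF assms] by simp
  finally have t: "tail (F (F (F d))) = tail d" .
  have "lift (F (F (F d))) = ?e" using l3 tau3 lift_in assms by auto
  then show ?thesis using dart_eq d3 assms t by blast
qed

lemma face_eq: assumes "d \<in> Dt" shows "face_of rho d = {d, F d, F (F d)}"
proof -
  have "(F ^^ k) d \<in> {d, F d, F (F d)}" for k
    by (induction k) (use F3[OF assms] in auto)
  moreover have "d = (F ^^ 0) d" "F d = (F ^^ 1) d" "F (F d) = (F ^^ 2) d"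
    by (auto simp: numeral_2_eq_2)
  ultimately show ?thesis unfolding face_of_def by blast
qed

lemma face_tails: assumes "d \<in> Dt"
  shows "tail d \<noteq> tail (F d)" "tail (F d) \<noteq> tail (F (F d))" "tail (F (F d)) \<noteq> tail d"
    "\<not> same_part q (tail d) (tail (F d))" "\<not> same_part q (tail (F d)) (tail (F (F d)))"
    "\<not> same_part q (tail (F (F d))) (tail d)"
proof -
  have d1: "F d \<in> Dt" "F (F d) \<in> Dt" using F(1)[OF assms(1)] F(1)[OF F(1)[OF assms(1)]] by auto
  have h: "head (F (F d)) = tail d" using F(2)[OF d1(2)] F3[OF assms] by simp
  show "tail d \<noteq> tail (F d)" "tail (F d) \<noteq> tail (F (F d))" "tail (F (F d)) \<noteq> tail d"
    "\<not> same_part q (tail d) (tail (F d))" "\<not> same_part q (tail (F d)) (tail (F (F d)))"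
    "\<not> same_part q (tail (F (F d))) (tail d)"
    using mp_darts_D[OF assms] mp_darts_D[OF d1(1)] mp_darts_D[OF d1(2)] F assms d1 h by auto
qed

lemma face_card: assumes "d \<in> Dt" shows "card (face_of rho d) = 3"
  using face_tails[OF assms] by (auto simp: face_eq[OF assms] card_insert_if)

lemma face_vs: assumes "d \<in> Dt" shows "face_vertices (face_of rho d) = {tail d, tail (F d), tail (F (F d))}"
  by (simp add: face_eq[OF assms] face_vertices_def)

lemma face_of_F: assumes "d \<in> Dt" "d' \<in> face_of rho d" shows "face_of rho d' = face_of rho d"
proof -
  have d1: "F d \<in> Dt" "F (F d) \<in> Dt" by (rule F(1)[OF assms(1)], rule F(1)[OF F(1)[OF assms(1)]])
  have f3: "F (F (F d)) = d" by (rule F3[OF assms(1)])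
  from assms(2) have "d' = d \<or> d' = F d \<or> d' = F (F d)" unfolding face_eq[OF assms(1)] by simp
  then show ?thesis
  proof (elim disjE)
    assume "d' = d" then show ?thesis by simp
  next
    assume e: "d' = F d"
    show ?thesis unfolding e face_eq[OF d1(1)] face_eq[OF assms(1)] f3 by blast
  next
    assume e: "d' = F (F d)"
    have f4: "F (F (F (F d))) = F d" using f3 by simp
    show ?thesis unfolding e face_eq[OF d1(2)] face_eq[OF assms(1)] f3 f4 by blast
  qed
qed

lemma col_face: assumes "d \<in> Dt" shows "col (face_of rho d) = P (lift d)"
proof -
  have d1: "F d \<in> Dt" by (rule F(1)[OF assms(1)])
  have a: "P (lift (F d)) = P (lift d)" using F(3)[OF assms] P_tau[OF lift_in[OF assms]] by simp
  have b: "P (lift (F (F d))) = P (lift (F d))" using F(3)[OF d1] P_tau[OF lift_in[OF d1]] by simp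
  show ?thesis using a b by (simp add: col_def face_eq[OF assms])
qed

lemma col_proper: assumes "d \<in> Dt" shows "col (face_of rho d) \<noteq> col (face_of rho (rev_dart d))"
  using col_face[OF assms] col_face[OF rev_dart_in[OF assms]] lift_rev[OF assms] P_neg[OF lift_in[OF assms]]
  by simp


definition SQ :: "bool \<Rightarrow> (nat \<times> nat \<times> nat) set set" where
  "SQ Q = {f \<in> faces Dt rho. col f = Q}"
definition DQ :: "bool \<Rightarrow> nat set multiset" where
  "DQ Q = image_mset face_vertices (mset_set (SQ Q))"

lemma SQ_finite: "finite (SQ Q)"
proof -
  have "finite (faces Dt rho)" unfolding faces_def using finite_mp_darts by simp
  then show ?thesis unfolding SQ_def by simp
qed

lemma SQ_face: "f \<in> SQ Q \<Longrightarrow> \<exists>d\<in>Dt. f = face_of rho d \<and> col f = Q"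
  unfolding SQ_def faces_def by blast

lemma face_sub: assumes "d \<in> Dt" shows "face_of rho d \<subseteq> Dt"
  unfolding face_eq[OF assms] using F(1)[OF assms] F(1)[OF F(1)[OF assms]] assms by blast

lemma self_in_face: assumes "d \<in> Dt" shows "d \<in> face_of rho d"
  unfolding face_eq[OF assms] by blast

lemma dart_split: "d = (tail d, head d, snd (snd d))"
  by (cases d) (simp add: tail_def head_def)

lemma tri_unique:
  assumes d: "d \<in> Dt" and a: "a \<in> face_of rho d" and b: "b \<in> face_of rho d"
    and e: "{tail a, head a} = {tail b, head b}"
  shows "a = b"
proof -
  have d1: "F d \<in> Dt" "F (F d) \<in> Dt" by (rule F(1)[OF d], rule F(1)[OF F(1)[OF d]])
  have h: "head d = tail (F d)" "head (F d) = tail (F (F d))" "head (F (F d)) = tail d"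
    using F(2)[OF d] F(2)[OF d1(1)] F(2)[OF d1(2)] F3[OF d] by simp_all
  have t: "tail d \<noteq> tail (F d)" "tail (F d) \<noteq> tail (F (F d))" "tail (F (F d)) \<noteq> tail d"
    using face_tails[OF d] by simp_all
  have "a = d \<or> a = F d \<or> a = F (F d)" "b = d \<or> b = F d \<or> b = F (F d)"
    using a b unfolding face_eq[OF d] by simp_all
  then show ?thesis using e h t by (auto simp: doubleton_eq_iff)
qed

lemma tri_has:
  assumes d: "d \<in> Dt" and x: "x \<in> face_vertices (face_of rho d)" and y: "y \<in> face_vertices (face_of rho d)"
    and xy: "x \<noteq> y"
  shows "\<exists>a\<in>face_of rho d. (tail a = x \<and> head a = y) \<or> (tail a = y \<and> head a = x)"
proof -
  have d1: "F d \<in> Dt" "F (F d) \<in> Dt" by (rule F(1)[OF d], rule F(1)[OF F(1)[OF d]])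
  have h: "head d = tail (F d)" "head (F d) = tail (F (F d))" "head (F (F d)) = tail d"
    using F(2)[OF d] F(2)[OF d1(1)] F(2)[OF d1(2)] F3[OF d] by simp_all
  have xs: "x = tail d \<or> x = tail (F d) \<or> x = tail (F (F d))" using x unfolding face_vs[OF d] by simp
  have ys: "y = tail d \<or> y = tail (F d) \<or> y = tail (F (F d))" using y unfolding face_vs[OF d] by simp
  have m: "d \<in> face_of rho d" "F d \<in> face_of rho d" "F (F d) \<in> face_of rho d"
    unfolding face_eq[OF d] by simp_all
  show ?thesis using xs ys xy h m by metis
qed

lemma add_mod_cancel:
  fixes a b g v :: nat assumes "a < v" "b < v" "(a + g) mod v = (b + g) mod v" shows "a = b"
proof -
  have "int ((a+g) mod v) = int ((b+g) mod v)" using assms by simp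
  then have "(int a + int g) mod int v = (int b + int g) mod int v" by (simp add: of_nat_mod)
  then have "int v dvd (int a + int g) - (int b + int g)" by (simp add: mod_eq_dvd_iff)
  then have "int v dvd int a - int b" by simp
  then have "int a mod int v = int b mod int v" by (simp add: mod_eq_dvd_iff)
  then have "int (a mod v) = int (b mod v)" by (simp add: of_nat_mod)
  then show ?thesis using assms by simp
qed

lemma count_faces:
  assumes x: "x < v" and y: "y < v" and xy: "\<not> same_part q x y"
  shows "card {f \<in> SQ Q. x \<in> face_vertices f \<and> y \<in> face_vertices f} = lam"
proof -
  let ?S = "{f \<in> SQ Q. x \<in> face_vertices f \<and> y \<in> face_vertices f}"
  have xny: "x \<noteq> y" using xy by (auto simp: same_part_def)
  have inD: "(x, y, i) \<in> Dt" "(y, x, i) \<in> Dt" if "i < lam" for i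
    using that x y xy by (auto simp: mp_darts_def same_part_def)
  have revxy: "rev_dart (x, y, i) = (y, x, i)" for i by (simp add: rev_dart_def)
  define h where "h i = (if col (face_of rho (x, y, i)) = Q then face_of rho (x, y, i) else face_of rho (y, x, i))" for i
  have vs: "x \<in> face_vertices (face_of rho (x, y, i)) \<and> y \<in> face_vertices (face_of rho (x, y, i))"
    if "i < lam" for i
  proof -
    have "tail (x,y,i) = x" "tail (F (x,y,i)) = y" using F(2)[OF inD(1)[OF that]] by (simp_all add: tail_def head_def)
    then show ?thesis unfolding face_vs[OF inD(1)[OF that]] by simp
  qed
  have vs': "x \<in> face_vertices (face_of rho (y, x, i)) \<and> y \<in> face_vertices (face_of rho (y, x, i))"
    if "i < lam" for i
  proof -
    have "tail (y,x,i) = y" "tail (F (y,x,i)) = x" using F(2)[OF inD(2)[OF that]] by (simp_all add: tail_def head_def)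
    then show ?thesis unfolding face_vs[OF inD(2)[OF that]] by auto
  qed
  have colr: "col (face_of rho (y, x, i)) = (\<not> col (face_of rho (x, y, i)))" if "i < lam" for i
    using col_proper[OF inD(1)[OF that]] revxy by auto
  have hin: "h i \<in> ?S" if i: "i < lam" for i
  proof (cases "col (face_of rho (x, y, i)) = Q")
    case True
    then show ?thesis using vs[OF i] inD(1)[OF i] unfolding h_def SQ_def faces_def by auto
  next
    case False
    then have "col (face_of rho (y, x, i)) = Q" using colr[OF i] by auto
    then show ?thesis using False vs'[OF i] inD(2)[OF i] unfolding h_def SQ_def faces_def by auto
  qed
  have hd: "\<exists>a\<in>h i. snd (snd a) = i \<and> {tail a, head a} = {x, y}" if i: "i < lam" for i
  proof (cases "col (face_of rho (x, y, i)) = Q")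
    case True
    then show ?thesis unfolding h_def using self_in_face[OF inD(1)[OF i]]
      by (intro bexI[of _ "(x,y,i)"]) (auto simp: tail_def head_def)
  next
    case False
    then show ?thesis unfolding h_def using self_in_face[OF inD(2)[OF i]]
      by (intro bexI[of _ "(y,x,i)"]) (auto simp: tail_def head_def)
  qed
  have hbase: "\<exists>d\<in>Dt. h i = face_of rho d" if i: "i < lam" for i
    unfolding h_def using inD[OF i] by auto
  have inj: "inj_on h {..<lam}"
  proof (rule inj_onI)
    fix i j assume i: "i \<in> {..<lam}" and j: "j \<in> {..<lam}" and e: "h i = h j"
    obtain a where a: "a \<in> h i" "snd (snd a) = i" "{tail a, head a} = {x, y}" using hd i by blast
    obtain b where b: "b \<in> h j" "snd (snd b) = j" "{tail b, head b} = {x, y}" using hd j by blast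
    obtain d where d: "d \<in> Dt" "h i = face_of rho d" using hbase i by blast
    have "a = b" using tri_unique[OF d(1)] a b e d by metis
    then show "i = j" using a b by simp
  qed
  have surj: "h ` {..<lam} = ?S"
  proof
    show "h ` {..<lam} \<subseteq> ?S" using hin by blast
  next
    show "?S \<subseteq> h ` {..<lam}"
    proof
      fix f assume f: "f \<in> ?S"
      obtain d where d: "d \<in> Dt" "f = face_of rho d" "col f = Q" using SQ_face f by blast
      obtain a where a: "a \<in> face_of rho d" "(tail a = x \<and> head a = y) \<or> (tail a = y \<and> head a = x)"
        using tri_has[OF d(1)] f d xny by blast
      have aD: "a \<in> Dt" using face_sub[OF d(1)] a(1) by blast
      have fa: "face_of rho a = f" using face_of_F[OF d(1) a(1)] d by simp
      define i where "i = snd (snd a)"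
      have i: "i < lam" using mp_darts_D(4)[OF aD] i_def by simp
      show "f \<in> h ` {..<lam}"
      proof (cases "tail a = x \<and> head a = y")
        case True
        then have "a = (x, y, i)" using dart_split[of a] i_def by simp
        then have "h i = f" unfolding h_def using fa d(3) by simp
        then show ?thesis using i by blast
      next
        case False
        then have "tail a = y \<and> head a = x" using a(2) by blast
        then have "a = (y, x, i)" using dart_split[of a] i_def by simp
        then have "col (face_of rho (x, y, i)) \<noteq> Q" using colr[OF i] fa d(3) by simp
        then have "h i = f" unfolding h_def using fa \<open>a = (y, x, i)\<close> by simp
        then show ?thesis using i by blast
      qed
    qed
  qed
  show ?thesis using card_image[OF inj] surj by simp
qed

lemma decomp: "is_3cycle_decomp q r lam (DQ Q)"
  unfolding is_3cycle_decomp_def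
proof (intro conjI ballI impI)
  fix S assume "S \<in># DQ Q"
  then obtain f where f: "f \<in> SQ Q" "S = face_vertices f"
    unfolding DQ_def using SQ_finite by (auto simp: elem_mset_set)
  obtain d where d: "d \<in> Dt" "f = face_of rho d" using SQ_face[OF f(1)] by blast
  have d1: "F d \<in> Dt" "F (F d) \<in> Dt" by (rule F(1)[OF d(1)], rule F(1)[OF F(1)[OF d(1)]])
  have S: "S = {tail d, tail (F d), tail (F (F d))}" using f d face_vs by simp
  have t: "tail d \<noteq> tail (F d)" "tail (F d) \<noteq> tail (F (F d))" "tail (F (F d)) \<noteq> tail d"
    "\<not> same_part q (tail d) (tail (F d))" "\<not> same_part q (tail (F d)) (tail (F (F d)))"
    "\<not> same_part q (tail (F (F d))) (tail d)" using face_tails[OF d(1)] by simp_all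
  show "card S = 3" using S t by simp
  show "S \<subseteq> mp_vertices q r" using S mp_darts_D(1)[OF d(1)] mp_darts_D(1)[OF d1(1)] mp_darts_D(1)[OF d1(2)]
    by (auto simp: mp_vertices_def)
  have sym: "same_part q a b = same_part q b a" for a b by (auto simp: same_part_def)
  show "\<And>x y. x \<in> S \<Longrightarrow> y \<in> S \<Longrightarrow> x \<noteq> y \<Longrightarrow> \<not> same_part q x y" using S t sym by auto
next
  fix x y assume x: "x \<in> mp_vertices q r" and y: "y \<in> mp_vertices q r" and xy: "\<not> same_part q x y"
  have "size (filter_mset (\<lambda>S. x \<in> S \<and> y \<in> S) (DQ Q))
      = size (filter_mset (\<lambda>f. x \<in> face_vertices f \<and> y \<in> face_vertices f) (mset_set (SQ Q)))"
    unfolding DQ_def filter_mset_image_mset by simp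
  also have "\<dots> = card {f \<in> SQ Q. x \<in> face_vertices f \<and> y \<in> face_vertices f}"
    using SQ_finite by (simp add: filter_mset_mset_set)
  also have "\<dots> = lam" using count_faces x y xy by (simp add: mp_vertices_def)
  finally show "size (filter_mset (\<lambda>S. x \<in> S \<and> y \<in> S) (DQ Q)) = lam" .
qed


lemma Tr: assumes "d \<in> Dt"
  shows "Tr g d \<in> Dt" "tail (Tr g d) = (tail d + g) mod v" "lift (Tr g d) = lift d"
proof -
  have "(tail d + g) mod v < v" using qr_pos by simp
  then show "Tr g d \<in> Dt" "tail (Tr g d) = (tail d + g) mod v" "lift (Tr g d) = lift d"
    using unl[OF _ lift_in[OF assms]] unfolding Tr_def by simp_all
qed

lemma Tr_head: assumes "d \<in> Dt" shows "head (Tr g d) = (head d + g) mod v"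
proof -
  have "head (Tr g d) = ((tail d + g) mod v + val (lift d)) mod v"
    using lift_head[OF Tr(1)[OF assms]] Tr(2,3)[OF assms] by simp
  also have "\<dots> = (tail d + val (lift d) + g) mod v" by (simp add: mod_add_left_eq mod_add_right_eq ac_simps)
  also have "\<dots> = (head d + g) mod v" using lift_head[OF assms] by (simp add: mod_add_left_eq)
  finally show ?thesis .
qed

lemma Tr_rho: assumes "d \<in> Dt" shows "rho (Tr g d) = Tr g (rho d)"
  using Tr[OF assms] Tr[OF rho(1)[OF assms]] rho[OF assms] rho[OF Tr(1)[OF assms]]
  by (intro dart_eq) simp_all

lemma Tr_rev: assumes "d \<in> Dt" shows "rev_dart (Tr g d) = Tr g (rev_dart d)"
proof (rule dart_eq)
  show "rev_dart (Tr g d) \<in> Dt" using rev_dart_in[OF Tr(1)[OF assms]] .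
  show "Tr g (rev_dart d) \<in> Dt" using Tr(1)[OF rev_dart_in[OF assms]] .
  show "tail (rev_dart (Tr g d)) = tail (Tr g (rev_dart d))"
    using Tr_head[OF assms] Tr(2)[OF rev_dart_in[OF assms]] by simp
  show "lift (rev_dart (Tr g d)) = lift (Tr g (rev_dart d))"
    using lift_rev[OF Tr(1)[OF assms]] Tr(3)[OF assms] Tr(3)[OF rev_dart_in[OF assms]] lift_rev[OF assms] by simp
qed

lemma Tr_F: assumes "d \<in> Dt" shows "F (Tr g d) = Tr g (F d)"
  unfolding face_perm_def comp_def using Tr_rev[OF assms] Tr_rho[OF rev_dart_in[OF assms]] by simp

lemma Tr_face: assumes "d \<in> Dt" shows "face_of rho (Tr g d) = Tr g ` face_of rho d"
proof -
  have d1: "F d \<in> Dt" by (rule F(1)[OF assms])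
  have "F (F (Tr g d)) = Tr g (F (F d))" using Tr_F[OF assms] Tr_F[OF d1] by simp
  then show ?thesis unfolding face_eq[OF assms] face_eq[OF Tr(1)[OF assms]] using Tr_F[OF assms] by simp
qed

lemma Tr_inj: "inj_on (Tr g) Dt"
proof (rule inj_onI)
  fix a b assume a: "a \<in> Dt" and b: "b \<in> Dt" and e: "Tr g a = Tr g b"
  have "(tail a + g) mod v = (tail b + g) mod v" using Tr(2)[OF a, of g] Tr(2)[OF b, of g] e by simp
  then have "tail a = tail b" using add_mod_cancel mp_darts_D(1)[OF a] mp_darts_D(1)[OF b] by blast
  moreover have "lift a = lift b" using Tr(3)[OF a, of g] Tr(3)[OF b, of g] e by simp
  ultimately show "a = b" using dart_eq a b by blast
qed

lemma cyclic: "image_mset (translate_cycle v g) (DQ Q) = DQ Q"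
proof -
  let ?phi = "\<lambda>f. Tr g ` f"
  have fv: "face_vertices (?phi f) = translate_cycle v g (face_vertices f)" if "f \<subseteq> Dt" for f
  proof -
    have "face_vertices (?phi f) = (\<lambda>d. tail (Tr g d)) ` f" unfolding face_vertices_def by (simp add: image_image)
    also have "\<dots> = (\<lambda>d. (tail d + g) mod v) ` f" using Tr(2) that by (intro image_cong) auto
    also have "\<dots> = translate_cycle v g (face_vertices f)" unfolding translate_cycle_def face_vertices_def
      by (simp add: image_image)
    finally show ?thesis .
  qed
  have sub: "?phi ` SQ Q \<subseteq> SQ Q"
  proof
    fix f' assume "f' \<in> ?phi ` SQ Q"
    then obtain f where f: "f \<in> SQ Q" "f' = ?phi f" by blast
    obtain d where d: "d \<in> Dt" "f = face_of rho d" "col f = Q" using SQ_face[OF f(1)] by blast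
    have "f' = face_of rho (Tr g d)" using f d Tr_face by simp
    moreover have "col (face_of rho (Tr g d)) = Q" using col_face[OF Tr(1)[OF d(1)]] Tr(3)[OF d(1)] col_face[OF d(1)] d by simp
    ultimately show "f' \<in> SQ Q" unfolding SQ_def faces_def using Tr(1)[OF d(1)] by blast
  qed
  have U: "\<Union> (SQ Q) \<subseteq> Dt" using SQ_face face_sub by blast
  have inj: "inj_on ?phi (SQ Q)" by (rule inj_on_image[OF inj_on_subset[OF Tr_inj U]])
  have eq: "?phi ` SQ Q = SQ Q" using endo_inj_surj[OF SQ_finite sub inj] .
  have "image_mset (translate_cycle v g) (DQ Q) = image_mset (translate_cycle v g \<circ> face_vertices) (mset_set (SQ Q))"
    unfolding DQ_def by (simp add: multiset.map_comp)
  also have "\<dots> = image_mset (face_vertices \<circ> ?phi) (mset_set (SQ Q))"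
  proof (rule image_mset_cong)
    fix f assume "f \<in># mset_set (SQ Q)"
    then have "f \<in> SQ Q" using SQ_finite by (simp add: elem_mset_set)
    then have "f \<subseteq> Dt" using U by blast
    then show "(translate_cycle v g \<circ> face_vertices) f = (face_vertices \<circ> ?phi) f" using fv by simp
  qed
  also have "\<dots> = image_mset face_vertices (image_mset ?phi (mset_set (SQ Q)))" by (simp add: multiset.map_comp)
  also have "\<dots> = image_mset face_vertices (mset_set (?phi ` SQ Q))" by (simp add: image_mset_mset_set[OF inj])
  also have "\<dots> = DQ Q" unfolding DQ_def eq ..
  finally show ?thesis .
qed

theorem main: "\<exists>D D' \<rho> col.
           is_cyclic_3cycle_decomp q r lam D \<and>
           is_cyclic_3cycle_decomp q r lam D' \<and>
           orientable_biembedding q r lam D D' \<rho> col"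
proof (intro exI conjI)
  show "is_cyclic_3cycle_decomp q r lam (DQ True)" "is_cyclic_3cycle_decomp q r lam (DQ False)"
    unfolding is_cyclic_3cycle_decomp_def using decomp cyclic by blast+
  have c3: "\<forall>f \<in> faces Dt rho. card f = 3" unfolding faces_def using face_card by blast
  have cp: "\<forall>d \<in> Dt. col (face_of rho d) \<noteq> col (face_of rho (rev_dart d))" using col_proper by blast
  have e1: "image_mset face_vertices (mset_set {f \<in> faces Dt rho. col f}) = DQ True"
    unfolding DQ_def SQ_def by simp
  have e2: "image_mset face_vertices (mset_set {f \<in> faces Dt rho. \<not> col f}) = DQ False"
    unfolding DQ_def SQ_def by simp
  show "orientable_biembedding q r lam (DQ True) (DQ False) rho col"
    unfolding orientable_biembedding_def Let_def using rotation c3 cp e1 e2 by blast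
qed

end


lemma natmod_iff: "((a::nat) mod v = b mod v) = (int v dvd (int a - int b))"
proof -
  have "(a mod v = b mod v) = (int (a mod v) = int (b mod v))" by simp
  also have "\<dots> = (int a mod int v = int b mod int v)" by (simp add: of_nat_mod)
  also have "\<dots> = (int v dvd (int a - int b))" by (simp add: mod_eq_dvd_iff)
  finally show ?thesis .
qed

definition iota :: "nat \<Rightarrow> nat \<Rightarrow> nat \<Rightarrow> nat \<Rightarrow> nat \<Rightarrow> nat" where
  "iota v lam x d m = (if 2*d < v then m else if v < 2*d then lam - 1 - m
      else if x < v div 2 then m else lam - 1 - m)"

definition liftN :: "nat \<Rightarrow> nat \<Rightarrow> nat \<times> nat \<times> nat \<Rightarrow> nat" where
  "liftN v lam dd = (case dd of (x, y, i) \<Rightarrow> (y + v - x) mod v + v * iota v lam x ((y + v - x) mod v) i)"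

definition unliftN :: "nat \<Rightarrow> nat \<Rightarrow> nat \<Rightarrow> nat \<Rightarrow> nat \<times> nat \<times> nat" where
  "unliftN v lam x e = (x, (x + e mod v) mod v, iota v lam x (e mod v) (e div v))"

lemma iota_lt: "m < lam \<Longrightarrow> iota v lam x d m < lam"
  by (auto simp: iota_def)

lemma iota_inv: "m < lam \<Longrightarrow> iota v lam x d (iota v lam x d m) = m"
  by (auto simp: iota_def)

lemma D_eq: fixes x y v :: nat assumes "x < v" "y < v" shows "(y + v - x) mod v = (if x \<le> y then y - x else y + v - x)"
proof (cases "x \<le> y")
  case True
  then have e: "y + v - x = (y - x) + v" by linarith
  have "(y + v - x) mod v = (y - x) mod v" unfolding e by simp
  then show ?thesis using True assms by simp
next
  case False
  then show ?thesis using assms by simp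
qed

lemma dvd_mod_cancel:
  fixes q v a :: nat assumes "q dvd v" shows "(a mod v) mod q = a mod q"
  using assms by (simp add: mod_mod_cancel)

context
  fixes q r lam vv :: nat
  assumes q: "q > 0" and r: "r > 0" and lam: "lam > 0" and vdef: "vv = q * r"
begin

abbreviation "Lb \<equiv> {e. e < vv * lam \<and> e mod q \<noteq> 0}"

lemma vpos: "vv > 0" using q r vdef by simp

lemma liftN_basic:
  assumes d: "(x, y, i) \<in> mp_darts q r lam"
  shows "liftN vv lam (x, y, i) mod vv = (y + vv - x) mod vv"
    "liftN vv lam (x, y, i) div vv = iota vv lam x ((y + vv - x) mod vv) i"
    "(x + (y + vv - x) mod vv) mod vv = y"
proof -
  have xy: "x < vv" "y < vv" using d vdef by (auto simp: mp_darts_def)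
  let ?D = "(y + vv - x) mod vv"
  have Dl: "?D < vv" using vpos by simp
  show "liftN vv lam (x, y, i) mod vv = ?D" unfolding liftN_def using Dl by simp
  show "liftN vv lam (x, y, i) div vv = iota vv lam x ?D i" unfolding liftN_def using Dl vpos by simp
  have "(x + ?D) mod vv = (x + (y + vv - x)) mod vv" by (simp add: mod_add_right_eq)
  also have "x + (y + vv - x) = y + vv" using xy by simp
  finally show "(x + ?D) mod vv = y" using xy by simp
qed

lemma notsame_dvd:
  assumes "x < vv" "y < vv" "\<not> same_part q x y"
  shows "(y + vv - x) mod q \<noteq> 0"
proof
  assume h: "(y + vv - x) mod q = 0"
  have "int q dvd int (y + vv - x)" using h by (simp add: mod_eq_0_iff_dvd)
  moreover have "int (y + vv - x) = int y - int x + int q * int r" using assms vdef by simp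
  ultimately have "int q dvd int y - int x" by (metis dvd_add_left_iff dvd_triv_left)
  then have "y mod q = x mod q" using natmod_iff by blast
  then show False using assms(3) by (simp add: same_part_def)
qed

lemma liftN_in: assumes d: "(x, y, i) \<in> mp_darts q r lam" shows "liftN vv lam (x, y, i) \<in> Lb"
proof -
  have xy: "x < vv" "y < vv" "\<not> same_part q x y" "i < lam" using d vdef by (auto simp: mp_darts_def same_part_def)
  let ?D = "(y + vv - x) mod vv"
  let ?m = "iota vv lam x ?D i"
  have Dl: "?D < vv" using vpos by simp
  have ml: "?m < lam" using iota_lt xy by blast
  have "?D + vv * ?m < vv + vv * ?m" using Dl by simp
  also have "vv + vv * ?m = vv * (?m + 1)" by simp
  also have "\<dots> \<le> vv * lam" using ml by (intro mult_le_mono2) simp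
  finally have lt: "liftN vv lam (x, y, i) < vv * lam" unfolding liftN_def by simp
  have qv: "q dvd vv" using vdef by simp
  have "liftN vv lam (x, y, i) = ?D + q * (r * ?m)" unfolding liftN_def using vdef by simp
  then have "liftN vv lam (x, y, i) mod q = ?D mod q" by (simp only: mod_mult_self2)
  also have "\<dots> = (y + vv - x) mod q" using dvd_mod_cancel[OF qv] by simp
  finally have "liftN vv lam (x, y, i) mod q \<noteq> 0" using notsame_dvd xy by simp
  then show ?thesis using lt by simp
qed


lemma unliftN_in:
  assumes x: "x < vv" and e: "e \<in> Lb"
  shows "unliftN vv lam x e \<in> mp_darts q r lam" "tail (unliftN vv lam x e) = x"
    "liftN vv lam (unliftN vv lam x e) = e"
proof -
  let ?y = "(x + e mod vv) mod vv"
  let ?i = "iota vv lam x (e mod vv) (e div vv)"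
  have el: "e < vv * lam" "e mod q \<noteq> 0" using e by auto
  have yl: "?y < vv" using vpos by simp
  have dl: "e div vv < lam" using el(1) vpos by (simp add: div_less_iff_less_mult mult.commute)
  have il: "?i < lam" using iota_lt[OF dl] .
  have qv: "q dvd vv" using vdef by simp
  have ymq: "?y mod q = (x + e) mod q"
    using dvd_mod_cancel[OF qv] by (metis mod_add_right_eq)
  have ns: "\<not> same_part q x ?y"
  proof
    assume "same_part q x ?y"
    then have "x mod q = (x + e) mod q" using ymq by (simp add: same_part_def)
    then have "int q dvd int x - int (x + e)" using natmod_iff by blast
    then have "int q dvd int e" by (metis dvd_minus_iff minus_diff_eq of_nat_add add_diff_cancel_left')
    then show False using el(2) by (simp add: mod_eq_0_iff_dvd)
  qed
  show "unliftN vv lam x e \<in> mp_darts q r lam" unfolding unliftN_def mp_darts_def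
    using x yl il ns vdef by simp
  show "tail (unliftN vv lam x e) = x" by (simp add: unliftN_def tail_def)
  have D: "(?y + vv - x) mod vv = e mod vv"
  proof -
    have "int vv dvd int (?y + vv - x) - int e"
    proof -
      have "?y mod vv = (x + e) mod vv" by (simp add: mod_add_right_eq)
      then have "int vv dvd int ?y - int (x + e)" using natmod_iff by blast
      moreover have "int (?y + vv - x) - int e = (int ?y - int (x + e)) + int vv" using x by simp
      ultimately show ?thesis by (metis dvd_add dvd_refl)
    qed
    then have "(?y + vv - x) mod vv = e mod vv" using natmod_iff by blast
    then show ?thesis by simp
  qed
  have "liftN vv lam (unliftN vv lam x e) = e mod vv + vv * iota vv lam x (e mod vv) ?i"
    unfolding unliftN_def liftN_def using D by simp
  also have "\<dots> = e mod vv + vv * (e div vv)" using iota_inv[OF dl] by simp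
  also have "\<dots> = e" by simp
  finally show "liftN vv lam (unliftN vv lam x e) = e" .
qed

lemma unliftN_liftN:
  assumes d: "d \<in> mp_darts q r lam" shows "unliftN vv lam (tail d) (liftN vv lam d) = d"
proof -
  obtain x y i where xyi: "d = (x, y, i)" by (cases d) auto
  have il: "i < lam" using d xyi by (simp add: mp_darts_def)
  note b = liftN_basic[OF d[unfolded xyi]]
  show ?thesis unfolding xyi unliftN_def tail_def using b iota_inv[OF il] by simp
qed

lemma liftN_bij: assumes x: "x < vv"
  shows "bij_betw (liftN vv lam) {d \<in> mp_darts q r lam. tail d = x} Lb"
proof (rule bij_betw_byWitness[where f'="unliftN vv lam x"])
  show "\<forall>a\<in>{d \<in> mp_darts q r lam. tail d = x}. unliftN vv lam x (liftN vv lam a) = a"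
    using unliftN_liftN by blast
  show "\<forall>a'\<in>Lb. liftN vv lam (unliftN vv lam x a') = a'" using unliftN_in[OF x] by blast
  show "liftN vv lam ` {d \<in> mp_darts q r lam. tail d = x} \<subseteq> Lb"
  proof
    fix e assume "e \<in> liftN vv lam ` {d \<in> mp_darts q r lam. tail d = x}"
    then obtain d where d: "d \<in> mp_darts q r lam" "e = liftN vv lam d" by blast
    obtain a b c where "d = (a, b, c)" by (cases d) auto
    then show "e \<in> Lb" using liftN_in d by simp
  qed
  show "unliftN vv lam x ` Lb \<subseteq> {d \<in> mp_darts q r lam. tail d = x}" using unliftN_in[OF x] by blast
qed

lemma liftN_head: assumes d: "d \<in> mp_darts q r lam"
  shows "head d = (tail d + liftN vv lam d) mod vv"
proof -
  obtain x y i where xyi: "d = (x, y, i)" by (cases d) auto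
  note b = liftN_basic[OF d[unfolded xyi]]
  have "(x + liftN vv lam (x, y, i)) mod vv = (x + liftN vv lam (x, y, i) mod vv) mod vv"
    by (simp add: mod_add_right_eq)
  then show ?thesis using b unfolding xyi by (simp add: head_def tail_def)
qed

lemma liftN_pos: assumes d: "(x, y, i) \<in> mp_darts q r lam" shows "0 < liftN vv lam (x, y, i)"
proof -
  have "liftN vv lam (x, y, i) mod q \<noteq> 0" using liftN_in[OF d] by simp
  then show ?thesis by (cases "liftN vv lam (x, y, i)") auto
qed

lemma liftN_rev: assumes d: "d \<in> mp_darts q r lam"
  shows "liftN vv lam (rev_dart d) = (vv * lam - liftN vv lam d) mod (vv * lam)"
proof -
  obtain x y i where xyi: "d = (x, y, i)" by (cases d) auto
  have dd: "(x, y, i) \<in> mp_darts q r lam" using d xyi by simp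
  have rd: "(y, x, i) \<in> mp_darts q r lam" using rev_dart_in[OF d] xyi by (simp add: rev_dart_def)
  have xy: "x < vv" "y < vv" "x \<noteq> y" "i < lam" using dd vdef by (auto simp: mp_darts_def same_part_def)
  define D where "D = (y + vv - x) mod vv"
  define D' where "D' = (x + vv - y) mod vv"
  have De: "D = (if x \<le> y then y - x else y + vv - x)" unfolding D_def using D_eq xy by blast
  have D'e: "D' = (if y \<le> x then x - y else x + vv - y)" unfolding D'_def using D_eq xy by blast
  have sum: "D + D' = vv" using De D'e xy by auto
  have Dp: "0 < D" "D < vv" using De xy by auto
  have yD: "y = (x + D) mod vv" using liftN_basic(3)[OF dd] D_def by simp
  have L1: "liftN vv lam (x, y, i) = D + vv * iota vv lam x D i" unfolding liftN_def D_def by simp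
  have L2: "liftN vv lam (y, x, i) = D' + vv * iota vv lam y D' i" unfolding liftN_def D'_def by simp
  have msum: "iota vv lam x D i + iota vv lam y D' i = lam - 1"
  proof (cases "2 * D < vv")
    case True
    then have "vv < 2 * D'" using sum by simp
    then show ?thesis using True xy by (simp add: iota_def)
  next
    case False
    show ?thesis
    proof (cases "vv < 2 * D")
      case True
      then have "2 * D' < vv" using sum by simp
      then show ?thesis using True xy by (simp add: iota_def)
    next
      case False2: False
      then have D2: "2 * D = vv" using False by simp
      then have D'D: "D' = D" using sum by simp
      have Dv: "D = vv div 2" using D2 by simp
      show ?thesis
      proof (cases "x < vv div 2")
        case True
        then have "y = x + D" using yD Dv D2 by simp
        then have "\<not> y < vv div 2" using Dv by simp
        then show ?thesis using True D2 D'D xy by (simp add: iota_def)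
      next
        case False
        then have "x + D \<ge> vv" using Dv D2 by simp
        then have ge: "x + D \<ge> vv" "x + D - vv < vv" using xy Dp by linarith+
        have "(x + D) mod vv = (x + D - vv) mod vv" using ge(1) by (simp add: mod_if)
        then have "y = x + D - vv" using yD ge(2) by simp
        then have "y < vv div 2" using Dv D2 xy ge by linarith
        then show ?thesis using False D2 D'D xy by (simp add: iota_def)
      qed
    qed
  qed
  have mm: "vv * iota vv lam x D i + vv * iota vv lam y D' i = vv * (lam - 1)"
    using msum by (metis add_mult_distrib2)
  have "liftN vv lam (x, y, i) + liftN vv lam (y, x, i) = (D + D') + (vv * iota vv lam x D i + vv * iota vv lam y D' i)"
    using L1 L2 by simp
  also have "\<dots> = vv + vv * (lam - 1)" using sum mm by simp
  finally have "liftN vv lam (x, y, i) + liftN vv lam (y, x, i) = vv + vv * (lam - 1)" .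
  also have "\<dots> = vv * lam" using lam by (cases lam) (simp_all add: algebra_simps)
  finally have S: "liftN vv lam (x, y, i) + liftN vv lam (y, x, i) = vv * lam" .
  have P: "0 < liftN vv lam (x, y, i)" using liftN_pos[OF dd] .
  have "liftN vv lam (y, x, i) = vv * lam - liftN vv lam (x, y, i)" using S by simp
  moreover have "vv * lam - liftN vv lam (x, y, i) < vv * lam" using P S by simp
  ultimately show ?thesis unfolding xyi by (simp add: rev_dart_def)
qed

end


definition aI :: "nat \<Rightarrow> int \<Rightarrow> nat \<Rightarrow> int" where
  "aI M i s = (if s = 0 then 1 + int M * i else if s = 1 then 2 - 2 * int M * i else int M * i - 3)"

definition EI :: "nat \<Rightarrow> nat \<Rightarrow> nat \<times> nat \<times> bool \<Rightarrow> int" where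
  "EI M n l = (case l of (i, s, b) \<Rightarrow> (if b then aI M (int i) s else - aI M (int i) s) mod int (M * n))"

definition EE :: "nat \<Rightarrow> nat \<Rightarrow> nat \<times> nat \<times> bool \<Rightarrow> nat" where
  "EE M n l = nat (EI M n l)"

definition LabC :: "nat \<Rightarrow> (nat \<times> nat \<times> bool) set" where
  "LabC n = {..<n} \<times> {..<3} \<times> UNIV"

definition negC :: "nat \<times> nat \<times> bool \<Rightarrow> nat \<times> nat \<times> bool" where
  "negC l = (case l of (i, s, b) \<Rightarrow> (i, s, \<not> b))"

definition cn :: "nat \<Rightarrow> nat \<times> nat \<Rightarrow> nat \<times> nat" where
  "cn n c = (case c of (i, s) \<Rightarrow> (let j = (i + s) mod n; ns = (if j = 0 then (s + 1) mod 3 else (s + 2) mod 3)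
      in ((j + 2 * n - ns) mod n, ns)))"

definition sgC :: "nat \<Rightarrow> nat \<times> nat \<times> bool \<Rightarrow> nat \<times> nat \<times> bool" where
  "sgC n l = (case l of (i, s, b) \<Rightarrow> if b then (fst (cn n (i, s)), snd (cn n (i, s)), False) else (i, (s + 1) mod 3, True))"

definition PC :: "nat \<times> nat \<times> bool \<Rightarrow> bool" where
  "PC l = snd (snd l)"

lemma cn_range: assumes "n > 0" "s < 3" shows "fst (cn n (i, s)) < n" "snd (cn n (i, s)) < 3"
  using assms by (auto simp: cn_def Let_def)

lemma cn_col: assumes "n > 0" shows "(fst (cn n (i, s)) + snd (cn n (i, s))) mod n = (i + s) mod n"
proof -
  define j where "j = (i + s) mod n"
  define ns where "ns = (if j = 0 then (s + 1) mod 3 else (s + 2) mod 3)"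
  have ns3: "ns \<le> 2" unfolding ns_def by auto
  have c: "cn n (i, s) = ((j + 2 * n - ns) mod n, ns)" unfolding cn_def j_def ns_def Let_def by simp
  have "((j + 2 * n - ns) mod n + ns) mod n = ((j + 2 * n - ns) + ns) mod n" by (simp add: mod_add_left_eq)
  also have "(j + 2 * n - ns) + ns = j + n * 2" using ns3 assms by simp
  also have "(j + n * 2) mod n = j mod n" by simp
  finally show ?thesis using c j_def by simp
qed

lemma cn_snd: "snd (cn n (i, s)) = (if (i + s) mod n = 0 then (s + 1) mod 3 else (s + 2) mod 3)"
  by (simp add: cn_def Let_def)

lemma add_mod_cancel2:
  fixes a b g v :: nat assumes "a < v" "b < v" "(a + g) mod v = (b + g) mod v" shows "a = b"
proof -
  have "int ((a+g) mod v) = int ((b+g) mod v)" using assms by simp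
  then have "(int a + int g) mod int v = (int b + int g) mod int v" by (simp add: of_nat_mod)
  then have "int v dvd (int a + int g) - (int b + int g)" by (simp add: mod_eq_dvd_iff)
  then have "int v dvd int a - int b" by simp
  then have "int a mod int v = int b mod int v" by (simp add: mod_eq_dvd_iff)
  then have "int (a mod v) = int (b mod v)" by (simp add: of_nat_mod)
  then show ?thesis using assms by simp
qed

lemma cell_eq: fixes i i' n s :: nat assumes "i < n" "i' < n" "(i + s) mod n = (i' + s) mod n" shows "i = i'"
  by (rule add_mod_cancel2[OF assms])

lemma cn3: assumes n: "n > 0" and i: "i < n" and s: "s < 3" shows "cn n (cn n (cn n (i, s))) = (i, s)"
proof -
  define c1 where "c1 = cn n (i, s)"
  define c2 where "c2 = cn n c1"
  define c3 where "c3 = cn n c2"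
  have r1: "fst c1 < n" "snd c1 < 3" using cn_range[OF n s] c1_def by auto
  have r2: "fst c2 < n" "snd c2 < 3" using cn_range[OF n r1(2), of "fst c1"] unfolding c2_def by simp_all
  have r3: "fst c3 < n" "snd c3 < 3" using cn_range[OF n r2(2), of "fst c2"] unfolding c3_def by simp_all
  have k1: "(fst c1 + snd c1) mod n = (i + s) mod n" using cn_col[OF n] c1_def by simp
  have k2: "(fst c2 + snd c2) mod n = (i + s) mod n" using cn_col[OF n, of "fst c1" "snd c1"] c2_def k1 by simp
  have k3: "(fst c3 + snd c3) mod n = (i + s) mod n" using cn_col[OF n, of "fst c2" "snd c2"] c3_def k2 by simp
  have s1: "snd c1 = (if (i + s) mod n = 0 then (s + 1) mod 3 else (s + 2) mod 3)" using cn_snd c1_def by simp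
  have s2: "snd c2 = (if (i + s) mod n = 0 then (snd c1 + 1) mod 3 else (snd c1 + 2) mod 3)"
    using cn_snd[of n "fst c1" "snd c1"] c2_def k1 by simp
  have s3: "snd c3 = (if (i + s) mod n = 0 then (snd c2 + 1) mod 3 else (snd c2 + 2) mod 3)"
    using cn_snd[of n "fst c2" "snd c2"] c3_def k2 by simp
  have ss: "snd c3 = s" using s1 s2 s3 s by (cases "(i + s) mod n = 0"; auto simp: mod_Suc)
  have "fst c3 = i" using cell_eq[OF r3(1) i] k3 ss by simp
  then have "c3 = (i, s)" using ss by (cases c3) simp
  then show ?thesis using c1_def c2_def c3_def by simp
qed


lemma modsum3: fixes a b c a' b' c' m :: int
  assumes "a mod m = a' mod m" "b mod m = b' mod m" "c mod m = c' mod m"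
  shows "(a + b + c) mod m = (a' + b' + c') mod m"
  using assms by (metis mod_add_eq)

lemma aI_diff: assumes "s < 3"
  shows "aI M i s - aI M i' s = (if s = 1 then -2 else 1) * int M * (i - i')"
  using assms by (auto simp: aI_def algebra_simps)

lemma aI_shift: assumes "s < 3" shows "aI M (i + int n * k) s mod int (M * n) = aI M i s mod int (M * n)"
proof -
  have "aI M (i + int n * k) s - aI M i s = ((if s = 1 then -2 else 1) * k) * int (M * n)"
    using aI_diff[OF assms, of M "i + int n * k" i] by (simp add: algebra_simps)
  then show ?thesis by (metis add.commute diff_add_cancel mod_mult_self2 mult.commute)
qed

lemma aI_col: assumes "n > 0" "s < 3"
  shows "aI M (int i) s mod int (M * n) = aI M (int ((i + s) mod n) - int s) s mod int (M * n)"
proof -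
  have "int i = (int ((i + s) mod n) - int s) + int n * int ((i + s) div n)"
  proof -
    have "i + s = (i + s) mod n + n * ((i + s) div n)" by simp
    then have "int (i + s) = int ((i + s) mod n) + int n * int ((i + s) div n)" by (metis of_nat_add of_nat_mult)
    then show ?thesis by simp
  qed
  then show ?thesis using aI_shift[OF assms(2), of M "int ((i + s) mod n) - int s" n "int ((i + s) div n)"] by simp
qed

lemma row_sum: "aI M i 0 + aI M i 1 + aI M i 2 = 0" by (simp add: aI_def)
lemma col_sum: "aI M j 0 + aI M (j - 1) 1 + aI M (j - 2) 2 = 0" by (simp add: aI_def algebra_simps)

lemma EI_T: "EI M n (i, s, True) = aI M (int i) s mod int (M * n)" by (simp add: EI_def)
lemma EI_F: "EI M n (i, s, False) = (- aI M (int i) s) mod int (M * n)" by (simp add: EI_def)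

lemma tau_sum_int:
  assumes n: "n > 0" and l: "l \<in> LabC n"
  shows "(EI M n l + EI M n (sgC n (negC l)) + EI M n (sgC n (negC (sgC n (negC l))))) mod int (M * n) = 0"
proof -
  obtain i s b where isb: "l = (i, s, b)" by (cases l) auto
  have i: "i < n" and s: "s < 3" using l isb by (auto simp: LabC_def)
  let ?m = "int (M * n)"
  show ?thesis
  proof (cases b)
    case True
    have lT: "l = (i, s, True)" using isb True by simp
    have t1: "sgC n (negC l) = (i, (s + 1) mod 3, True)" using lT by (simp add: sgC_def negC_def)
    have t2: "sgC n (negC (sgC n (negC l))) = (i, ((s + 1) mod 3 + 1) mod 3, True)" using t1 by (simp add: sgC_def negC_def)
    have "(EI M n l + EI M n (sgC n (negC l)) + EI M n (sgC n (negC (sgC n (negC l))))) mod ?m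
        = (aI M (int i) s + aI M (int i) ((s + 1) mod 3) + aI M (int i) (((s + 1) mod 3 + 1) mod 3)) mod ?m"
      unfolding t1 t2 by (rule modsum3) (simp_all add: lT EI_T sgC_def negC_def)
    also have "aI M (int i) s + aI M (int i) ((s + 1) mod 3) + aI M (int i) (((s + 1) mod 3 + 1) mod 3) = 0"
    proof -
      have "s = 0 \<or> s = 1 \<or> s = 2" using s by auto
      then show ?thesis by (auto simp: aI_def algebra_simps)
    qed
    finally show ?thesis by simp
  next
    case False
    have lF: "l = (i, s, False)" using isb False by simp
    define c1 where "c1 = cn n (i, s)"
    define c2 where "c2 = cn n c1"
    have t1: "sgC n (negC l) = (fst c1, snd c1, False)" using lF c1_def by (simp add: sgC_def negC_def)
    have t2: "sgC n (negC (sgC n (negC l))) = (fst c2, snd c2, False)" using t1 c2_def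
      by (simp add: sgC_def negC_def)
    have r1: "fst c1 < n" "snd c1 < 3" using cn_range[OF n s] c1_def by auto
    have r2: "fst c2 < n" "snd c2 < 3" using cn_range[OF n r1(2), of "fst c1"] unfolding c2_def by simp_all
    define j where "j = (i + s) mod n"
    have k1: "(fst c1 + snd c1) mod n = j" using cn_col[OF n] c1_def j_def by simp
    have k2: "(fst c2 + snd c2) mod n = j" using cn_col[OF n, of "fst c1" "snd c1"] c2_def k1 by simp
    have s1: "snd c1 = (if j = 0 then (s + 1) mod 3 else (s + 2) mod 3)" using cn_snd c1_def j_def by simp
    have s2: "snd c2 = (if j = 0 then (snd c1 + 1) mod 3 else (snd c1 + 2) mod 3)"
      using cn_snd[of n "fst c1" "snd c1"] c2_def k1 by simp
    let ?A = "\<lambda>t. aI M (int j - int t) t"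
    have e0: "(- aI M (int i) s) mod ?m = (- ?A s) mod ?m" using aI_col[OF n s, of M i] j_def by (metis mod_minus_eq)
    have e1: "(- aI M (int (fst c1)) (snd c1)) mod ?m = (- ?A (snd c1)) mod ?m"
      using aI_col[OF n r1(2), of M "fst c1"] k1 by (metis mod_minus_eq)
    have e2: "(- aI M (int (fst c2)) (snd c2)) mod ?m = (- ?A (snd c2)) mod ?m"
      using aI_col[OF n r2(2), of M "fst c2"] k2 by (metis mod_minus_eq)
    have "(EI M n l + EI M n (sgC n (negC l)) + EI M n (sgC n (negC (sgC n (negC l))))) mod ?m
        = (- ?A s + - ?A (snd c1) + - ?A (snd c2)) mod ?m"
    proof (rule modsum3)
      show "EI M n l mod ?m = (- ?A s) mod ?m" by (simp only: lF EI_F mod_mod_trivial e0)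
      show "EI M n (sgC n (negC l)) mod ?m = (- ?A (snd c1)) mod ?m" by (simp only: t1 EI_F mod_mod_trivial e1)
      show "EI M n (sgC n (negC (sgC n (negC l)))) mod ?m = (- ?A (snd c2)) mod ?m"
        by (simp only: t2 EI_F mod_mod_trivial e2)
    qed
    also have "- ?A s + - ?A (snd c1) + - ?A (snd c2) = 0"
    proof -
      have "s = 0 \<or> s = 1 \<or> s = 2" using s by auto
      then show ?thesis using s1 s2 by (cases "j = 0") (auto simp: aI_def algebra_simps)
    qed
    finally show ?thesis by simp
  qed
qed


definition cls :: "nat \<Rightarrow> bool \<Rightarrow> int" where
  "cls s b = (if b then 1 else -1) * (if s = 0 then 1 else if s = 1 then 2 else -3)"

lemma aI_modM: "aI M i s mod int M = (if s = 0 then 1 else if s = 1 then 2 else -3) mod int M"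
proof -
  have "aI M i s = (if s = 0 then 1 else if s = 1 then 2 else -3) + int M * (if s = 1 then -2 * i else i)"
    by (simp add: aI_def algebra_simps)
  then show ?thesis by (metis mod_mult_self2)
qed

lemma EI_modM: assumes "n > 0" shows "EI M n (i, s, b) mod int M = cls s b mod int M"
proof -
  have dv: "int M dvd int M * int n" by simp
  have "EI M n (i, s, b) mod int M = (if b then aI M (int i) s else - aI M (int i) s) mod int M"
    unfolding EI_def by (simp add: mod_mod_cancel[OF dv])
  also have "\<dots> = cls s b mod int M"
  proof (cases b)
    case True then show ?thesis using aI_modM[of M "int i" s] by (simp add: cls_def)
  next
    case False
    let ?c = "(if s = 0 then 1 else if s = 1 then 2 else -3) :: int"
    have "(- aI M (int i) s) mod int M = (- (aI M (int i) s mod int M)) mod int M" by (simp only: mod_minus_eq)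
    also have "\<dots> = (- (?c mod int M)) mod int M" unfolding aI_modM ..
    also have "\<dots> = (- ?c) mod int M" by (simp only: mod_minus_eq)
    finally show ?thesis using False by (simp add: cls_def)
  qed
  finally show ?thesis .
qed

lemma EI_range: assumes "n > 0" "M > 0" shows "0 \<le> EI M n l" "EI M n l < int (M * n)"
  using assms by (auto simp: EI_def split: prod.splits)

lemma int_EE: assumes "n > 0" "M > 0" shows "int (EE M n l) = EI M n l"
  using EI_range[OF assms] by (simp add: EE_def)

lemma int_dvd_eq: fixes i i' n :: nat assumes "i < n" "i' < n" "int n dvd int i - int i'" shows "i = i'"
proof -
  have "i mod n = i' mod n" using natmod_iff assms(3) by blast
  then show ?thesis using assms by simp
qed

context
  fixes M n q :: nat
  assumes Mq: "(M = 7 \<and> q = 7) \<or> (M = 8 \<and> q = 4)" and n: "odd n"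
begin

lemma npos: "n > 0" using n by (cases n) auto
lemma Mpos: "M > 0" using Mq by auto

lemma cls_inj: assumes "s < 3" "s' < 3" "cls s b mod int M = cls s' b' mod int M" shows "s = s' \<and> b = b'"
proof -
  have "s = 0 \<or> s = 1 \<or> s = 2" "s' = 0 \<or> s' = 1 \<or> s' = 2" using assms by auto
  then show ?thesis using assms(3) Mq by (cases b; cases b') (auto simp: cls_def)
qed

lemma cls_q: assumes "s < 3" shows "(cls s b mod int M) mod int q \<noteq> 0"
proof -
  have "s = 0 \<or> s = 1 \<or> s = 2" using assms by auto
  then show ?thesis using Mq by (cases b) (auto simp: cls_def)
qed

lemma EE_inj: "inj_on (EE M n) (LabC n)"
proof (rule inj_onI)
  fix l l' assume l: "l \<in> LabC n" and l': "l' \<in> LabC n" and e: "EE M n l = EE M n l'"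
  obtain i s b where isb: "l = (i, s, b)" by (cases l) auto
  obtain i' s' b' where isb': "l' = (i', s', b')" by (cases l') auto
  have r: "i < n" "s < 3" "i' < n" "s' < 3" using l l' isb isb' by (auto simp: LabC_def)
  have ee: "EI M n l = EI M n l'" using e int_EE[OF npos Mpos] by metis
  have "cls s b mod int M = cls s' b' mod int M" using EI_modM[OF npos] ee isb isb' by metis
  then have sb: "s = s'" "b = b'" using cls_inj r by auto
  let ?m = "int (M * n)"
  have "(if b then aI M (int i) s else - aI M (int i) s) mod ?m = (if b then aI M (int i') s else - aI M (int i') s) mod ?m"
    using ee isb isb' sb by (cases b) (simp_all add: EI_def)
  then have h: "?m dvd (if b then aI M (int i) s else - aI M (int i) s) - (if b then aI M (int i') s else - aI M (int i') s)"
    by (simp only: mod_eq_dvd_iff)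
  have "?m dvd aI M (int i) s - aI M (int i') s"
  proof (cases b)
    case True then show ?thesis using h by simp
  next
    case False
    have "(- aI M (int i) s) - (- aI M (int i') s) = - (aI M (int i) s - aI M (int i') s)" by simp
    then have "?m dvd - (aI M (int i) s - aI M (int i') s)" using h False by simp
    then show ?thesis by (simp only: dvd_minus_iff)
  qed
  moreover have "aI M (int i) s - aI M (int i') s = int M * ((if s = 1 then -2 else 1) * (int i - int i'))"
    using aI_diff[OF r(2), of M "int i" "int i'"] by (simp only: mult.assoc mult.left_commute)
  ultimately have "int M * int n dvd int M * ((if s = 1 then -2 else 1) * (int i - int i'))"
    by (simp only: of_nat_mult)
  moreover have "int M \<noteq> 0" using Mpos by simp
  ultimately have d: "int n dvd (if s = 1 then -2 else 1) * (int i - int i')" by (rule zdvd_mult_cancel)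
  have cop: "coprime (int n) 2" by (subst coprime_right_2_iff_odd) (use n in simp)
  have "int n dvd int i - int i'"
  proof (cases "s = 1")
    case True
    have eq: "(if s = 1 then -2 else 1) * (int i - int i') = - ((int i - int i') * 2)" using True by simp
    from d have "int n dvd - ((int i - int i') * 2)" by (simp only: eq)
    then have "int n dvd (int i - int i') * 2" by (simp only: dvd_minus_iff)
    then show ?thesis using coprime_dvd_mult_left_iff[OF cop] by blast
  next
    case False then show ?thesis using d by simp
  qed
  then have "i = i'" using int_dvd_eq r by blast
  then show "l = l'" using isb isb' sb by simp
qed

lemma EE_range: assumes "l \<in> LabC n" shows "EE M n l < M * n" "EE M n l mod q \<noteq> 0"
proof -
  obtain i s b where isb: "l = (i, s, b)" by (cases l) auto
  have s: "s < 3" using assms isb by (auto simp: LabC_def)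
  have ie: "int (EE M n l) = EI M n l" using int_EE[OF npos Mpos] .
  show "EE M n l < M * n" using EI_range(2)[OF npos Mpos, of l] ie by linarith
  have qM: "int q dvd int M" using Mq by auto
  have "int (EE M n l) mod int q = (EI M n l mod int M) mod int q" using ie by (simp add: mod_mod_cancel[OF qM])
  also have "\<dots> = (cls s b mod int M) mod int q" using EI_modM[OF npos] isb by simp
  finally have "int (EE M n l) mod int q \<noteq> 0" using cls_q[OF s] by simp
  then show "EE M n l mod q \<noteq> 0" by (metis of_nat_0 of_nat_mod)
qed

lemma card_Lb: assumes "q > 0" "q dvd N" shows "card {e. e < N \<and> e mod q \<noteq> 0} = N - N div q"
proof -
  have A: "{e. e < N \<and> e mod q \<noteq> 0} = {..<N} - (\<lambda>k. q * k) ` {..<N div q}"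
  proof (rule set_eqI)
    fix e
    show "e \<in> {e. e < N \<and> e mod q \<noteq> 0} \<longleftrightarrow> e \<in> {..<N} - (\<lambda>k. q * k) ` {..<N div q}"
    proof
      assume "e \<in> {e. e < N \<and> e mod q \<noteq> 0}"
      then show "e \<in> {..<N} - (\<lambda>k. q * k) ` {..<N div q}" by auto
    next
      assume h: "e \<in> {..<N} - (\<lambda>k. q * k) ` {..<N div q}"
      then have eN: "e < N" by simp
      show "e \<in> {e. e < N \<and> e mod q \<noteq> 0}"
      proof (rule ccontr)
        assume "e \<notin> {e. e < N \<and> e mod q \<noteq> 0}"
        then have "e mod q = 0" using eN by simp
        then obtain k where k: "e = q * k" by (metis mod_eq_0_iff_dvd dvdE)
        obtain c where c: "N = q * c" using assms(2) by (rule dvdE)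
        have "k < c" using eN k c assms(1) by simp
        then have "k < N div q" using c assms(1) by simp
        then show False using h k by auto
      qed
    qed
  qed
  have B: "(\<lambda>k. q * k) ` {..<N div q} \<subseteq> {..<N}"
  proof
    fix e assume "e \<in> (\<lambda>k. q * k) ` {..<N div q}"
    then obtain k where k: "k < N div q" "e = q * k" by auto
    obtain c where c: "N = q * c" using assms(2) by (rule dvdE)
    show "e \<in> {..<N}" using k c assms(1) by simp
  qed
  have C: "card ((\<lambda>k. q * k) ` {..<N div q}) = N div q"
    using assms(1) by (subst card_image) (auto simp: inj_on_def)
  show ?thesis unfolding A using card_Diff_subset[OF _ B] C by simp
qed

lemma EE_bij: "bij_betw (EE M n) (LabC n) {e. e < M * n \<and> e mod q \<noteq> 0}"
proof -
  let ?B = "{e. e < M * n \<and> e mod q \<noteq> 0}"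
  have sub: "EE M n ` LabC n \<subseteq> ?B" using EE_range by blast
  have cA: "card (LabC n) = 6 * n" by (simp add: LabC_def card_cartesian_product)
  have qpos: "q > 0" "q dvd M * n" using Mq by auto
  have "card ?B = M * n - M * n div q" using card_Lb[OF qpos] .
  also have "\<dots> = 6 * n" using Mq by auto
  finally have cB: "card ?B = 6 * n" .
  have ci: "card (EE M n ` LabC n) = 6 * n" using card_image[OF EE_inj] cA by simp
  have fin: "finite ?B" by simp
  have "EE M n ` LabC n = ?B" using card_subset_eq[OF fin sub] ci cB by simp
  then show ?thesis using EE_inj by (simp add: bij_betw_def)
qed

end


definition RR :: "nat \<Rightarrow> nat \<times> nat \<times> bool \<Rightarrow> bool" where
  "RR n l = (\<exists>k. (sgC n ^^ k) (0, 0, True) = l)"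

lemma RR0: "RR n (0, 0, True)" unfolding RR_def by (rule exI[of _ 0]) simp

lemma RR_step: "RR n l \<Longrightarrow> RR n (sgC n l)"
  unfolding RR_def by (metis funpow.simps(2) comp_apply)

lemma f_eq: "sgC n (sgC n (i, s, True)) = (fst (cn n (i, s)), (snd (cn n (i, s)) + 1) mod 3, True)"
  by (simp add: sgC_def)

lemma RR_f: assumes "RR n (i, s, True)" "cn n (i, s) = (i', s')"
  shows "RR n (i', (s' + 1) mod 3, True)"
  using RR_step[OF RR_step[OF assms(1)]] f_eq[of n i s] assms(2) by simp

lemma RR_f': assumes "RR n (i, s, True)" "cn n (i, s) = (i', s')" "s'' = (s' + 1) mod 3"
  shows "RR n (i', s'', True)"
  using RR_f[OF assms(1,2)] assms(3) by simp

lemma mod_shift: "a < (n::nat) \<Longrightarrow> (a + n * k) mod n = a" by simp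

lemma cn_eval: assumes "(i + s) mod n = j" "ns = (if j = 0 then (s + 1) mod 3 else (s + 2) mod 3)"
    "j + 2 * n - ns = r + n * k" "r < n"
  shows "cn n (i, s) = (r, ns)"
proof -
  have "cn n (i, s) = ((j + 2 * n - ns) mod n, ns)" using assms(1,2) by (simp add: cn_def Let_def)
  also have "(j + 2 * n - ns) mod n = r" using assms(3,4) by simp
  finally show ?thesis .
qed

lemma cnA: assumes "n \<ge> 2" shows "cn n (0, 0) = (n - 1, 1)"
  by (rule cn_eval[where j=0 and k=1]) (use assms in simp_all)
lemma cnB: assumes "i + 2 < n" shows "cn n (i, 2) = (i + 1, 1)"
  by (rule cn_eval[where j="i+2" and k=2]) (use assms in simp_all)
lemma cnC: assumes "n \<ge> 2" shows "cn n (n - 1, 2) = (0, 1)"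
proof (rule cn_eval[where j=1 and k=2])
  have "n - 1 + 2 = 1 + n * 1" using assms by simp
  then show "(n - 1 + 2) mod n = 1" using assms by (metis mod_shift one_less_numeral_iff semiring_norm(76) less_le_trans)
qed (use assms in simp_all)
lemma cnD: assumes "n \<ge> 2" shows "cn n (n - 2, 2) = (0, 0)"
proof (rule cn_eval[where j=0 and k=2])
  have e: "n - 2 + 2 = n" using assms by simp
  show "(n - 2 + 2) mod n = 0" by (subst e) simp
qed (use assms in simp_all)
lemma cnE: assumes "i + 1 < n" shows "cn n (i, 1) = (i + 1, 0)"
  by (rule cn_eval[where j="i+1" and k=2]) (use assms in simp_all)
lemma cnF: assumes "n \<ge> 2" shows "cn n (n - 1, 1) = (n - 2, 2)"
  by (rule cn_eval[where j=0 and k=1]) (use assms in simp_all)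
lemma cnG: assumes "2 \<le> i" "i < n" shows "cn n (i, 0) = (i - 2, 2)"
  by (rule cn_eval[where j=i and k=2]) (use assms in simp_all)
lemma cnH: assumes "n \<ge> 2" shows "cn n (1, 0) = (n - 1, 2)"
  by (rule cn_eval[where j=1 and k=1]) (use assms in simp_all)


lemma RR_P_big: assumes n3: "n \<ge> 3" and odd: "odd n" and i: "i < n" and sl: "s < 3"
  shows "RR n (i, s, True)"
proof -
  have n2: "n \<ge> 2" using n3 by simp
  have a1: "RR n (n - 1, 2, True)" by (rule RR_f'[OF RR0 cnA[OF n2]]) simp
  have a2: "RR n (0, 2, True)" by (rule RR_f'[OF a1 cnC[OF n2]]) simp
  have a3: "\<forall>i. i \<le> n - 2 \<longrightarrow> RR n (i, 2, True)"
  proof (intro allI)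
    fix i show "i \<le> n - 2 \<longrightarrow> RR n (i, 2, True)"
    proof (induction i)
      case 0 show ?case using a2 by simp
    next
      case (Suc i)
      show ?case
      proof
        assume h: "Suc i \<le> n - 2"
        then have r: "RR n (i, 2, True)" using Suc by simp
        have l: "i + 2 < n" using h n3 by simp
        show "RR n (Suc i, 2, True)" using RR_f'[OF r cnB[OF l], of 2] by simp
      qed
    qed
  qed
  have b1: "RR n (0, 1, True)" by (rule RR_f'[OF a3[rule_format, of "n - 2"] cnD[OF n2]]) simp_all
  have b2: "\<forall>i. i \<le> n - 1 \<longrightarrow> RR n (i, 1, True)"
  proof (intro allI)
    fix i show "i \<le> n - 1 \<longrightarrow> RR n (i, 1, True)"
    proof (induction i)
      case 0 show ?case using b1 by simp
    next
      case (Suc i)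
      show ?case
      proof
        assume h: "Suc i \<le> n - 1"
        then have r: "RR n (i, 1, True)" using Suc by simp
        have l: "i + 1 < n" using h n3 by simp
        show "RR n (Suc i, 1, True)" using RR_f'[OF r cnE[OF l], of 1] by simp
      qed
    qed
  qed
  have c1: "RR n (n - 2, 0, True)" by (rule RR_f'[OF b2[rule_format, of "n - 1"] cnF[OF n2]]) simp_all
  have c2: "\<forall>m. 2 * m \<le> n - 3 \<longrightarrow> RR n (n - 2 - 2 * m, 0, True)"
  proof (intro allI)
    fix m show "2 * m \<le> n - 3 \<longrightarrow> RR n (n - 2 - 2 * m, 0, True)"
    proof (induction m)
      case 0 show ?case using c1 by simp
    next
      case (Suc m)
      show ?case
      proof
        assume h: "2 * Suc m \<le> n - 3"
        then have r: "RR n (n - 2 - 2 * m, 0, True)" using Suc by simp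
        have g: "2 \<le> n - 2 - 2 * m" "n - 2 - 2 * m < n" using h n3 by simp_all
        have "RR n (n - 2 - 2 * m - 2, 0, True)" by (rule RR_f'[OF r cnG[OF g]]) simp
        moreover have "n - 2 - 2 * m - 2 = n - 2 - 2 * Suc m" by simp
        ultimately show "RR n (n - 2 - 2 * Suc m, 0, True)" by simp
      qed
    qed
  qed
  have odd_i: "RR n (i, 0, True)" if oi: "odd i" "i < n" for i
  proof -
    obtain k where k: "n = 2 * k + 1" using odd by (rule oddE)
    obtain a where a: "i = 2 * a + 1" using oi(1) by (rule oddE)
    have ak: "a < k" using oi(2) k a by simp
    define m where "m = k - a - 1"
    have "i \<le> n - 2" using k a ak by simp
    have m: "n - 2 - i = 2 * m" using k a ak m_def by simp
    have "2 * m \<le> n - 3" using k a ak m_def by simp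
    then have "RR n (n - 2 - 2 * m, 0, True)" using c2 by blast
    moreover have "n - 2 - 2 * m = i" using k a ak m_def by simp
    ultimately show ?thesis by simp
  qed
  have d1: "RR n (n - 1, 0, True)" by (rule RR_f'[OF odd_i[of 1] cnH[OF n2]]) (use n3 in simp_all)
  have d2: "\<forall>m. 2 * m \<le> n - 1 \<longrightarrow> RR n (n - 1 - 2 * m, 0, True)"
  proof (intro allI)
    fix m show "2 * m \<le> n - 1 \<longrightarrow> RR n (n - 1 - 2 * m, 0, True)"
    proof (induction m)
      case 0 show ?case using d1 by simp
    next
      case (Suc m)
      show ?case
      proof
        assume h: "2 * Suc m \<le> n - 1"
        then have r: "RR n (n - 1 - 2 * m, 0, True)" using Suc by simp
        have g: "2 \<le> n - 1 - 2 * m" "n - 1 - 2 * m < n" using h n3 by simp_all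
        have "RR n (n - 1 - 2 * m - 2, 0, True)" by (rule RR_f'[OF r cnG[OF g]]) simp
        moreover have "n - 1 - 2 * m - 2 = n - 1 - 2 * Suc m" by simp
        ultimately show "RR n (n - 1 - 2 * Suc m, 0, True)" by simp
      qed
    qed
  qed
  have even_i: "RR n (i, 0, True)" if ei: "even i" "i < n" for i
  proof -
    obtain k where k: "n = 2 * k + 1" using odd by (rule oddE)
    obtain a where a: "i = 2 * a" using ei(1) by (rule evenE)
    define m where "m = k - a"
    have m: "n - 1 - i = 2 * m" using k a m_def by simp
    have "2 * m \<le> n - 1" using k a m_def by simp
    then have "RR n (n - 1 - 2 * m, 0, True)" using d2 by blast
    moreover have "n - 1 - 2 * m = i" using k a m_def ei(2) by simp
    ultimately show ?thesis by simp
  qed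
  have "s = 0 \<or> s = 1 \<or> s = 2" using sl by auto
  then show ?thesis
  proof (elim disjE)
    assume "s = 0" then show ?thesis using odd_i even_i i by blast
  next
    assume "s = 1" then show ?thesis using b2 i by simp
  next
    assume s2: "s = 2"
    show ?thesis
    proof (cases "i = n - 1")
      case True then show ?thesis using a1 s2 by simp
    next
      case False then show ?thesis using a3 s2 i by simp
    qed
  qed
qed


lemma RR_P: assumes odd: "odd n" and i: "i < n" and sl: "s < 3" shows "RR n (i, s, True)"
proof (cases "n \<ge> 3")
  case True then show ?thesis using RR_P_big assms by blast
next
  case False
  obtain k where k: "n = 2 * k + 1" using odd by (rule oddE)
  then have n1: "n = 1" using False by simp
  then have i0: "i = 0" using i by simp
  have c00: "cn 1 (0, 0) = (0, 1)" by (rule cn_eval[where j=0 and k=1]) simp_all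
  have c02: "cn 1 (0, 2) = (0, 0)" by (rule cn_eval[where j=0 and k=2]) simp_all
  have a1: "RR 1 (0, 2, True)" by (rule RR_f'[OF RR0 c00]) simp
  have a2: "RR 1 (0, 1, True)" by (rule RR_f'[OF a1 c02]) simp
  have "s = 0 \<or> s = 1 \<or> s = 2" using sl by auto
  then show ?thesis using n1 i0 a1 a2 RR0 by auto
qed

lemma RR_all: assumes odd: "odd n" and l: "l \<in> LabC n" shows "RR n l"
proof -
  obtain i s b where isb: "l = (i, s, b)" by (cases l) auto
  have i: "i < n" and s: "s < 3" using l isb by (auto simp: LabC_def)
  have n: "n > 0" using i by simp
  show ?thesis
  proof (cases b)
    case True then show ?thesis using RR_P[OF odd i s] isb by simp
  next
    case False
    define c where "c = cn n (cn n (i, s))"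
    have r1: "fst (cn n (i, s)) < n" "snd (cn n (i, s)) < 3" using cn_range[OF n s] by auto
    have r: "fst c < n" "snd c < 3" using cn_range[OF n r1(2), of "fst (cn n (i, s))"] unfolding c_def by simp_all
    have "RR n (fst c, snd c, True)" using RR_P[OF odd r] .
    then have "RR n (sgC n (fst c, snd c, True))" by (rule RR_step)
    moreover have "sgC n (fst c, snd c, True) = (i, s, False)"
      using cn3[OF n i s] unfolding c_def by (simp add: sgC_def)
    ultimately show ?thesis using isb False by simp
  qed
qed

lemma sgC_in: assumes "l \<in> LabC n" shows "sgC n l \<in> LabC n"
proof -
  obtain i s b where isb: "l = (i, s, b)" by (cases l) auto
  have i: "i < n" and s: "s < 3" using assms isb by (auto simp: LabC_def)
  have n: "n > 0" using i by simp
  show ?thesis using cn_range[OF n s, of i] i isb by (cases b) (auto simp: sgC_def LabC_def)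
qed

lemma negC_in: "l \<in> LabC n \<Longrightarrow> negC l \<in> LabC n" by (auto simp: negC_def LabC_def split: prod.splits)
lemma negC_negC: "negC (negC l) = l" by (simp add: negC_def split: prod.splits)

lemma tauC3: assumes "l \<in> LabC n" shows "sgC n (negC (sgC n (negC (sgC n (negC l))))) = l"
proof -
  obtain i s b where isb: "l = (i, s, b)" by (cases l) auto
  have i: "i < n" and s: "s < 3" using assms isb by (auto simp: LabC_def)
  have n: "n > 0" using i by simp
  show ?thesis
  proof (cases b)
    case True
    have "s = 0 \<or> s = 1 \<or> s = 2" using s by auto
    then show ?thesis using isb True by (auto simp: sgC_def negC_def)
  next
    case False
    show ?thesis using cn3[OF n i s] isb False by (simp add: sgC_def negC_def)
  qed
qed

lemma sgC_inj: "inj_on (sgC n) (LabC n)"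
proof (rule inj_onI)
  fix a b assume a: "a \<in> LabC n" and b: "b \<in> LabC n" and e: "sgC n a = sgC n b"
  let ?t = "\<lambda>x. sgC n (negC x)"
  have "?t (negC a) = ?t (negC b)" using e by (simp add: negC_negC)
  then have "?t (?t (?t (negC a))) = ?t (?t (?t (negC b)))" by simp
  then have "negC a = negC b" using tauC3[OF negC_in[OF a]] tauC3[OF negC_in[OF b]] by simp
  then show "a = b" by (metis negC_negC)
qed

lemma PC_tau: "PC (sgC n (negC l)) = PC l" by (auto simp: PC_def sgC_def negC_def split: prod.splits)
lemma PC_neg: "PC (negC l) = (\<not> PC l)" by (auto simp: PC_def negC_def split: prod.splits)

lemma sgC_cyc: assumes odd: "odd n" and l: "l \<in> LabC n" and l': "l' \<in> LabC n"
  shows "\<exists>k. (sgC n ^^ k) l = l'"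
proof -
  obtain k where k: "(sgC n ^^ k) (0, 0, True) = l" using RR_all[OF odd l] unfolding RR_def by blast
  obtain k' where k': "(sgC n ^^ k') (0, 0, True) = l'" using RR_all[OF odd l'] unfolding RR_def by blast
  have n: "n > 0" using odd by (cases n) auto
  have l0: "(0, 0, True) \<in> LabC n" using n by (simp add: LabC_def)
  have fin: "finite (LabC n)" by (simp add: LabC_def)
  obtain k'' where k'': "(sgC n ^^ k'') l = (0, 0, True)"
    using funpow_reach_sym[OF fin sgC_in sgC_inj l0 k] by blast
  have "(sgC n ^^ (k' + k'')) l = l'" using k' k'' by (simp add: funpow_add)
  then show ?thesis by blast
qed

lemma EE_neg: assumes "n > 0" "M > 0" shows "EE M n (negC l) = (M * n - EE M n l) mod (M * n)"
proof -
  obtain i s b where isb: "l = (i, s, b)" by (cases l) auto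
  let ?m = "int (M * n)"
  let ?a = "if b then aI M (int i) s else - aI M (int i) s"
  have e1: "EI M n l = ?a mod ?m" using isb by (simp add: EI_def)
  have e2: "EI M n (negC l) = (- ?a) mod ?m" using isb by (cases b) (simp_all add: EI_def negC_def)
  have mp: "?m > 0" using assms by simp
  have le: "EE M n l \<le> M * n" using EI_range(2)[OF assms, of l] int_EE[OF assms, of l] by linarith
  have "int ((M * n - EE M n l) mod (M * n)) = (?m - int (EE M n l)) mod ?m"
    using le by (simp add: of_nat_mod of_nat_diff)
  also have "\<dots> = (?m - EI M n l) mod ?m" using int_EE[OF assms] by simp
  also have "\<dots> = (- EI M n l) mod ?m" by (metis minus_mod_self1 mod_diff_eq diff_0 mod_self)
  also have "\<dots> = (- (?a mod ?m)) mod ?m" using e1 by simp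
  also have "\<dots> = (- ?a) mod ?m" by (simp only: mod_minus_eq)
  also have "\<dots> = int (EE M n (negC l))" using e2 int_EE[OF assms] by simp
  finally show ?thesis by simp
qed



lemma assemble:
  fixes M n q r lam :: nat
  assumes Mq: "(M = 7 \<and> q = 7) \<or> (M = 8 \<and> q = 4)" and n: "odd n" and r: "r > 0" and lam: "lam > 0"
    and NN: "q * r * lam = M * n"
  shows "\<exists>D D' \<rho> col.
           is_cyclic_3cycle_decomp q r lam D \<and>
           is_cyclic_3cycle_decomp q r lam D' \<and>
           orientable_biembedding q r lam D D' \<rho> col"
proof -
  let ?L = "\<lambda>d. inv_into (LabC n) (EE M n) (liftN (q * r) lam d)"
  have q: "q > 0" using Mq by auto
  have npos: "n > 0" using n by (cases n) auto
  have Mpos: "M > 0" using Mq by auto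
  have Eb: "bij_betw (EE M n) (LabC n) {e. e < M * n \<and> e mod q \<noteq> 0}" using EE_bij[OF Mq n] .
  have Lb: "bij_betw (liftN (q * r) lam) {d \<in> mp_darts q r lam. tail d = x} {e. e < M * n \<and> e mod q \<noteq> 0}"
    if "x < q * r" for x
    using liftN_bij[of q r lam "q * r", OF q r lam refl that] NN by simp
  have inL: "liftN (q * r) lam d \<in> {e. e < M * n \<and> e mod q \<noteq> 0}" if d: "d \<in> mp_darts q r lam" for d
  proof -
    have "d \<in> {d' \<in> mp_darts q r lam. tail d' = tail d}" using d by simp
    then show ?thesis using bij_betwE[OF Lb[OF mp_darts_D(1)[OF d]]] by blast
  qed
  have EL: "EE M n (?L d) = liftN (q * r) lam d" if d: "d \<in> mp_darts q r lam" for d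
    using inL[OF d] bij_betw_imp_surj_on[OF Eb] by (metis f_inv_into_f)
  have Lin: "?L d \<in> LabC n" if d: "d \<in> mp_darts q r lam" for d
    using inL[OF d] bij_betw_imp_surj_on[OF Eb] by (metis inv_into_into)
  interpret B: biemb q r lam "LabC n" "EE M n" negC "sgC n" PC ?L
  proof
    show "0 < q * r" using q r by simp
  next
    fix x assume x: "x < q * r"
    have "bij_betw (inv_into (LabC n) (EE M n) \<circ> liftN (q * r) lam) {d \<in> mp_darts q r lam. tail d = x} (LabC n)"
      by (rule bij_betw_trans[OF Lb[OF x] bij_betw_inv_into[OF Eb]])
    then show "bij_betw ?L {d \<in> mp_darts q r lam. tail d = x} (LabC n)" by (simp add: comp_def)
  next
    fix d assume d: "d \<in> mp_darts q r lam"
    show "head d = (tail d + EE M n (?L d)) mod (q * r)"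
      using EL[OF d] liftN_head[of q r lam "q * r", OF q r lam refl d] by simp
  next
    fix d assume d: "d \<in> mp_darts q r lam"
    let ?l = "?L d"
    have lr: "liftN (q * r) lam (rev_dart d) = (M * n - EE M n ?l) mod (M * n)"
      using liftN_rev[of q r lam "q * r", OF q r lam refl d] EL[OF d] NN by simp
    also have "\<dots> = EE M n (negC ?l)" using EE_neg[OF npos Mpos] by simp
    finally have "?L (rev_dart d) = inv_into (LabC n) (EE M n) (EE M n (negC ?l))" by simp
    also have "\<dots> = negC ?l"
      using inv_into_f_f[OF bij_betw_imp_inj_on[OF Eb] negC_in[OF Lin[OF d]]] .
    finally show "?L (rev_dart d) = negC ?l" .
  next
    fix l assume "l \<in> LabC n" then show "sgC n l \<in> LabC n" by (rule sgC_in)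
  next
    show "inj_on (sgC n) (LabC n)" by (rule sgC_inj)
  next
    fix l l' assume "l \<in> LabC n" "l' \<in> LabC n" then show "\<exists>k. (sgC n ^^ k) l = l'" using sgC_cyc[OF n] by blast
  next
    fix l assume "l \<in> LabC n" then show "sgC n (negC (sgC n (negC (sgC n (negC l))))) = l" by (rule tauC3)
  next
    fix l assume l: "l \<in> LabC n"
    let ?t1 = "sgC n (negC l)"
    let ?t2 = "sgC n (negC (sgC n (negC l)))"
    have "(EI M n l + EI M n ?t1 + EI M n ?t2) mod int (M * n) = 0" using tau_sum_int[OF npos l] .
    then have "int (M * n) dvd int (EE M n l + EE M n ?t1 + EE M n ?t2)"
      using int_EE[OF npos Mpos] by (simp add: mod_eq_0_iff_dvd)
    then have "M * n dvd EE M n l + EE M n ?t1 + EE M n ?t2" by (simp only: of_nat_dvd_iff)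
    moreover have "q * r dvd M * n" using NN[symmetric] by simp
    ultimately have "q * r dvd EE M n l + EE M n ?t1 + EE M n ?t2" by (rule dvd_trans[rotated])
    then show "(EE M n l + EE M n ?t1 + EE M n ?t2) mod (q * r) = 0" by simp
  next
    fix l show "PC (sgC n (negC l)) = PC l" by (rule PC_tau)
  next
    fix l show "PC (negC l) = (\<not> PC l)" by (rule PC_neg)
  qed
  show ?thesis by (rule B.main)
qed



theorem proposition5:
  fixes n t lam :: nat
  assumes "odd n"
    and "t = n \<or> t = 2 * n"
    and "lam > 0" and "lam dvd t"
  shows "\<exists>D D' \<rho> col.
           is_cyclic_3cycle_decomp (6 * n div t + 1) (t div lam) lam D \<and>
           is_cyclic_3cycle_decomp (6 * n div t + 1) (t div lam) lam D' \<and>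
           orientable_biembedding (6 * n div t + 1) (t div lam) lam D D' \<rho> col"
proof -
  have npos: "n > 0" using assms(1) by (cases n) auto
  have tpos: "t > 0" using assms(2) npos by auto
  obtain c where c: "t = lam * c" using assms(4) by (rule dvdE)
  have r: "t div lam = c" using c assms(3) by simp
  have rpos: "t div lam > 0" using r c tpos by (cases c) auto
  have tl: "t div lam * lam = t" using r c by simp
  from assms(2) show ?thesis
  proof
    assume t: "t = n"
    have q: "6 * n div t + 1 = 7" using t npos by simp
    have NN: "7 * (t div lam) * lam = 7 * n" using tl t by (simp add: mult.assoc)
    show ?thesis unfolding q by (rule assemble[of 7 7 n "t div lam" lam]) (use assms(1,3) rpos NN in simp_all)
  next
    assume t: "t = 2 * n"
    have q: "6 * n div t + 1 = 4" using t npos by simp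
    have NN: "4 * (t div lam) * lam = 8 * n" using tl t by (simp add: mult.assoc)
    show ?thesis unfolding q by (rule assemble[of 8 4 n "t div lam" lam]) (use assms(1,3) rpos NN in simp_all)
  qed
qed

end
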